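(* Let $B$ be the open unit ball of $\ell_1$ (complex scalars). For each $x$ in the unit sphere $S_{\ell_1}$, both the cluster value theorem and the polynomial cluster value theorem hold for $A_\infty(B)$ at $x$, i.e. $Cl_B(f,x)=\hat f(M_x)$ and $Cl_B^{\mathcal P}(f,x)=\hat f(M^{\mathcal P}_x)$ for all $f\in A_\infty(B)$.
   Context: $A_\infty(B)$: bounded holomorphic functions on $B$ extending continuously to $\bar B$, with sup norm; $M_{A_\infty(B)}$ its spectrum, $\hat f$ the Gelfand transform; $A_u(B)$: uniformly continuous holomorphic functions on $B$; $P(X)$ continuous polynomials, $\tilde P,\tilde g$ Aron–Berner extensions to $X^{**}$. $Cl_B(f,x)=\{\lambda:\exists\text{ net }(x_\alpha)\subset B,\ x_\alpha\to x\text{ weak-star in }X^{**},\ f(x_\alpha)\to\lambda\}$; $M_x=\{\tau:\tau(L)=L(x)\ \forall L\in X^*\}$; $Cl_B^{\mathcal P}(f,x)=\{\lambda:\exists\text{ net }(x_\alpha)\subset B,\ P(x_\alpha)\to\tilde P(x)\ \forall P\in P(X),\ f(x_\alpha)\to\lambda\}$; $M^{\mathcal P}_x=\{\tau:\tau(g)=\tilde g(x)\ \forall g\in A_u(B)\}$. *)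

theory Defs
  imports "HOL-Analysis.Analysis" "HOL-Library.Function_Algebras"
begin

type_synonym l1 = "nat \<Rightarrow> complex"

definition l1_space :: "l1 set" where
  "l1_space = {x. summable (\<lambda>n. norm (x n))}"

definition l1norm :: "l1 \<Rightarrow> real" where
  "l1norm x = (\<Sum>n. norm (x n))"

definition scl :: "complex \<Rightarrow> l1 \<Rightarrow> l1" where
  "scl c x = (\<lambda>n. c * x n)"

definition l1_ball :: "l1 set" where
  "l1_ball = {x \<in> l1_space. l1norm x < 1}"

definition l1_cball :: "l1 set" where
  "l1_cball = {x \<in> l1_space. l1norm x \<le> 1}"

definition l1_sphere :: "l1 set" where
  "l1_sphere = {x \<in> l1_space. l1norm x = 1}"

definition l1_dual :: "(l1 \<Rightarrow> complex) set" where
  "l1_dual = {L. (\<forall>x\<in>l1_space. \<forall>y\<in>l1_space. L (x + y) = L x + L y)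
               \<and> (\<forall>c. \<forall>x\<in>l1_space. L (scl c x) = c * L x)
               \<and> (\<exists>C. \<forall>x\<in>l1_space. norm (L x) \<le> C * l1norm x)}"

definition holo_on_ball :: "(l1 \<Rightarrow> complex) \<Rightarrow> bool" where
  "holo_on_ball f \<longleftrightarrow> (\<forall>a\<in>l1_ball. \<exists>D\<in>l1_dual. \<forall>e>0. \<exists>d>0. \<forall>h\<in>l1_space.
      l1norm h < d \<longrightarrow> norm (f (a + h) - f a - D h) \<le> e * l1norm h)"

definition cont_on_l1 :: "l1 set \<Rightarrow> (l1 \<Rightarrow> complex) \<Rightarrow> bool" where
  "cont_on_l1 S f \<longleftrightarrow> (\<forall>a\<in>S. \<forall>e>0. \<exists>d>0. \<forall>y\<in>S. l1norm (y - a) < d \<longrightarrow> norm (f y - f a) < e)"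

definition unif_cont_on_l1 :: "l1 set \<Rightarrow> (l1 \<Rightarrow> complex) \<Rightarrow> bool" where
  "unif_cont_on_l1 S f \<longleftrightarrow> (\<forall>e>0. \<exists>d>0. \<forall>a\<in>S. \<forall>y\<in>S. l1norm (y - a) < d \<longrightarrow> norm (f y - f a) < e)"

text \<open>A_infty(B): elements are represented canonically by their continuous extension
  to the closed ball, set to 0 outside the closed ball.\<close>
definition A_inf :: "(l1 \<Rightarrow> complex) set" where
  "A_inf = {f. holo_on_ball f \<and> cont_on_l1 l1_cball f \<and> (\<exists>C. \<forall>y\<in>l1_ball. norm (f y) \<le> C)
              \<and> (\<forall>y. y \<notin> l1_cball \<longrightarrow> f y = 0)}"

definition A_inf_one :: "l1 \<Rightarrow> complex" where
  "A_inf_one = (\<lambda>y. if y \<in> l1_cball then 1 else 0)"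

definition spectrum_A_inf :: "((l1 \<Rightarrow> complex) \<Rightarrow> complex) set" where
  "spectrum_A_inf = {\<tau>. (\<forall>f\<in>A_inf. \<forall>g\<in>A_inf. \<tau> (\<lambda>y. f y + g y) = \<tau> f + \<tau> g)
      \<and> (\<forall>c. \<forall>f\<in>A_inf. \<tau> (\<lambda>y. c * f y) = c * \<tau> f)
      \<and> (\<forall>f\<in>A_inf. \<forall>g\<in>A_inf. \<tau> (\<lambda>y. f y * g y) = \<tau> f * \<tau> g)
      \<and> (\<exists>f\<in>A_inf. \<tau> f \<noteq> 0)}"

definition gelfand :: "(l1 \<Rightarrow> complex) \<Rightarrow> ((l1 \<Rightarrow> complex) \<Rightarrow> complex) \<Rightarrow> complex" where
  "gelfand f \<tau> = \<tau> f"

text \<open>Fiber M_x, for x in the closed ball of X (viewed in X** canonically).\<close>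
definition fiber :: "l1 \<Rightarrow> ((l1 \<Rightarrow> complex) \<Rightarrow> complex) set" where
  "fiber x = {\<tau> \<in> spectrum_A_inf. \<forall>L\<in>l1_dual. \<tau> (\<lambda>y. if y \<in> l1_cball then L y else 0) = L x}"

text \<open>Cluster set: nets in B are represented by proper filters on l_1 eventually in B;
  weak-star convergence in X** to x in X is convergence under every L in X*.\<close>
definition cluster_set :: "(l1 \<Rightarrow> complex) \<Rightarrow> l1 \<Rightarrow> complex set" where
  "cluster_set f x = {v. \<exists>F. F \<noteq> bot \<and> eventually (\<lambda>y. y \<in> l1_ball) F
      \<and> (\<forall>L\<in>l1_dual. (L \<longlongrightarrow> L x) F) \<and> (f \<longlongrightarrow> v) F}"

definition multilin_l1 :: "nat \<Rightarrow> (l1 list \<Rightarrow> complex) \<Rightarrow> bool" where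
  "multilin_l1 k A \<longleftrightarrow>
     (\<forall>xs i y z c. length xs = k \<and> i < k \<and> set xs \<subseteq> l1_space \<and> y \<in> l1_space \<and> z \<in> l1_space \<longrightarrow>
        A (xs[i := y + z]) = A (xs[i := y]) + A (xs[i := z])
      \<and> A (xs[i := scl c y]) = c * A (xs[i := y]))
   \<and> (\<exists>C. \<forall>xs. length xs = k \<and> set xs \<subseteq> l1_space \<longrightarrow> norm (A xs) \<le> C * (\<Prod>v\<leftarrow>xs. l1norm v))"

definition poly_l1 :: "(l1 \<Rightarrow> complex) set" where
  "poly_l1 = {P. \<exists>N As. (\<forall>k\<le>N. multilin_l1 k (As k))
                   \<and> (\<forall>x\<in>l1_space. P x = (\<Sum>k\<le>N. As k (replicate k x)))}"

definition A_u :: "(l1 \<Rightarrow> complex) set" where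
  "A_u = {g. holo_on_ball g \<and> unif_cont_on_l1 l1_ball g}"

definition uc_ext :: "(l1 \<Rightarrow> complex) \<Rightarrow> l1 \<Rightarrow> complex" where
  "uc_ext g x = (THE v. \<forall>e>0. \<exists>d>0. \<forall>y\<in>l1_ball. l1norm (y - x) < d \<longrightarrow> norm (g y - v) < e)"

definition A_u_rep :: "(l1 \<Rightarrow> complex) \<Rightarrow> (l1 \<Rightarrow> complex)" where
  "A_u_rep g = (\<lambda>y. if y \<in> l1_cball then uc_ext g y else 0)"

definition fiber_P :: "l1 \<Rightarrow> ((l1 \<Rightarrow> complex) \<Rightarrow> complex) set" where
  "fiber_P x = {\<tau> \<in> spectrum_A_inf. \<forall>g\<in>A_u. \<tau> (A_u_rep g) = uc_ext g x}"

definition cluster_set_P :: "(l1 \<Rightarrow> complex) \<Rightarrow> l1 \<Rightarrow> complex set" where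
  "cluster_set_P f x = {v. \<exists>F. F \<noteq> bot \<and> eventually (\<lambda>y. y \<in> l1_ball) F
      \<and> (\<forall>P\<in>poly_l1. (P \<longlongrightarrow> P x) F) \<and> (f \<longlongrightarrow> v) F}"

end

theory Submission
  imports Defs
begin


lemma l1_summable: "x \<in> l1_space \<Longrightarrow> summable (\<lambda>n. norm (x n))"
  by (simp add: l1_space_def)

lemma l1norm_nonneg: "x \<in> l1_space \<Longrightarrow> 0 \<le> l1norm x"
  unfolding l1norm_def by (simp add: l1_summable suminf_nonneg)

lemma l1_add: "x \<in> l1_space \<Longrightarrow> y \<in> l1_space \<Longrightarrow> x + y \<in> l1_space"
  unfolding l1_space_def
  apply clarify
  apply (rule summable_comparison_test'[where g="\<lambda>n. norm(x n) + norm(y n)" and N=0])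
   apply (rule summable_add, assumption+)
  by (simp add: norm_triangle_ineq)

lemma l1_scl: "x \<in> l1_space \<Longrightarrow> scl c x \<in> l1_space"
  unfolding l1_space_def scl_def
  by (simp add: norm_mult summable_mult)

lemma l1_uminus: "x \<in> l1_space \<Longrightarrow> - x \<in> l1_space"
  unfolding l1_space_def by simp

lemma l1_diff: "x \<in> l1_space \<Longrightarrow> y \<in> l1_space \<Longrightarrow> x - y \<in> l1_space"
  using l1_add[of x "-y"] l1_uminus[of y] by (metis diff_conv_add_uminus)

lemma l1_zero: "(0::l1) \<in> l1_space"
  unfolding l1_space_def by simp

lemma l1norm_add: "x \<in> l1_space \<Longrightarrow> y \<in> l1_space \<Longrightarrow> l1norm (x + y) \<le> l1norm x + l1norm y"
proof -
  assume a: "x \<in> l1_space" "y \<in> l1_space"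
  have s: "summable (\<lambda>n. norm (x n))" "summable (\<lambda>n. norm (y n))" "summable (\<lambda>n. norm ((x+y) n))"
    using a l1_summable[OF l1_add[OF a]] l1_summable by auto
  have "(\<Sum>n. norm ((x+y) n)) \<le> (\<Sum>n. norm (x n) + norm (y n))"
    using s by (intro suminf_le) (auto simp: norm_triangle_ineq intro: summable_add[OF s(1) s(2)])
  also have "\<dots> = (\<Sum>n. norm (x n)) + (\<Sum>n. norm (y n))" using s by (simp add: suminf_add)
  finally show ?thesis unfolding l1norm_def .
qed

lemma l1norm_scl: "x \<in> l1_space \<Longrightarrow> l1norm (scl c x) = norm c * l1norm x"
  unfolding l1norm_def scl_def
  by (simp add: norm_mult suminf_mult l1_summable)

lemma l1norm_uminus: "l1norm (- x) = l1norm x"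
  unfolding l1norm_def by simp

lemma l1norm_diff_sym: "l1norm (x - y) = l1norm (y - x)"
  unfolding l1norm_def by (simp add: norm_minus_commute)

lemma l1norm_zero[simp]: "l1norm 0 = 0"
  unfolding l1norm_def by simp

lemma l1norm_coord: "x \<in> l1_space \<Longrightarrow> norm (x n) \<le> l1norm x"
proof -
  assume "x \<in> l1_space"
  hence "(\<Sum>i\<in>{n}. norm (x i)) \<le> (\<Sum>i. norm (x i))"
    by (intro sum_le_suminf) (auto simp: l1_summable)
  thus ?thesis unfolding l1norm_def by simp
qed

lemma l1norm_triangle: "x \<in> l1_space \<Longrightarrow> y \<in> l1_space \<Longrightarrow> z \<in> l1_space \<Longrightarrow>
   l1norm (x - z) \<le> l1norm (x - y) + l1norm (y - z)"
proof -
  assume a: "x \<in> l1_space" "y \<in> l1_space" "z \<in> l1_space"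
  have e: "(x - y) + (y - z) = x - z" by simp
  show ?thesis using l1norm_add[OF l1_diff[OF a(1,2)] l1_diff[OF a(2,3)]] unfolding e .
qed

lemma ball_sub_cball: "l1_ball \<subseteq> l1_cball"
  unfolding l1_ball_def l1_cball_def by auto

lemma sphere_sub_cball: "l1_sphere \<subseteq> l1_cball"
  unfolding l1_sphere_def l1_cball_def by auto

lemma ball_space: "y \<in> l1_ball \<Longrightarrow> y \<in> l1_space" by (simp add: l1_ball_def)
lemma cball_space: "y \<in> l1_cball \<Longrightarrow> y \<in> l1_space" by (simp add: l1_cball_def)

lemma ball_near: "a \<in> l1_ball \<Longrightarrow> h \<in> l1_space \<Longrightarrow> l1norm h < 1 - l1norm a \<Longrightarrow> a + h \<in> l1_ball"
proof -
  assume a: "a \<in> l1_ball" "h \<in> l1_space" "l1norm h < 1 - l1norm a"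
  have "a \<in> l1_space" using a(1) by (simp add: l1_ball_def)
  hence "a + h \<in> l1_space" "l1norm (a + h) \<le> l1norm a + l1norm h" using a(2) l1_add l1norm_add by auto
  thus ?thesis using a(3) by (simp add: l1_ball_def)
qed

lemma scl_cball_ball: "y \<in> l1_cball \<Longrightarrow> 0 \<le> t \<Longrightarrow> t < 1 \<Longrightarrow> scl (of_real t) y \<in> l1_ball"
proof -
  assume a: "y \<in> l1_cball" "0 \<le> t" "t < 1"
  hence "l1norm (scl (of_real t) y) = t * l1norm y" using l1norm_scl[OF cball_space[OF a(1)]] by simp
  also have "\<dots> \<le> t" using a unfolding l1_cball_def by (auto intro: mult_left_le)
  finally have "l1norm (scl (of_real t) y) < 1" using a(3) by simp
  thus ?thesis using l1_scl[OF cball_space[OF a(1)]] unfolding l1_ball_def by simp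
qed

lemma scl_dist: "y \<in> l1_space \<Longrightarrow> l1norm (scl (of_real t) y - y) = \<bar>1 - t\<bar> * l1norm y"
proof -
  assume "y \<in> l1_space"
  have "scl (of_real t) y - y = scl (of_real (t - 1)) y" unfolding scl_def by (auto simp: algebra_simps)
  moreover have "norm (complex_of_real (t - 1)) = \<bar>1 - t\<bar>" by (simp only: norm_of_real abs_minus_commute)
  ultimately show ?thesis using l1norm_scl[of y "complex_of_real (t - 1)"] \<open>y \<in> l1_space\<close> by simp
qed



definition small :: "(l1 \<Rightarrow> complex) \<Rightarrow> bool" where
  "small R \<longleftrightarrow> (\<forall>e>0. \<exists>d>0. \<forall>h\<in>l1_space. l1norm h < d \<longrightarrow> norm (R h) \<le> e * l1norm h)"

definition lip0 :: "(l1 \<Rightarrow> complex) \<Rightarrow> bool" where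
  "lip0 P \<longleftrightarrow> (\<exists>d>0. \<exists>C. \<forall>h\<in>l1_space. l1norm h < d \<longrightarrow> norm (P h) \<le> C * l1norm h)"

definition bnd0 :: "(l1 \<Rightarrow> complex) \<Rightarrow> bool" where
  "bnd0 B \<longleftrightarrow> (\<exists>d>0. \<exists>M. \<forall>h\<in>l1_space. l1norm h < d \<longrightarrow> norm (B h) \<le> M)"

lemma small_cong:
  assumes "small R" "d0 > 0" "\<And>h. h \<in> l1_space \<Longrightarrow> l1norm h < d0 \<Longrightarrow> R' h = R h"
  shows "small R'"
  unfolding small_def
proof (intro allI impI)
  fix e :: real assume "e > 0"
  then obtain d where d: "d > 0" "\<forall>h\<in>l1_space. l1norm h < d \<longrightarrow> norm (R h) \<le> e * l1norm h"
    using assms(1) unfolding small_def by blast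
  show "\<exists>d>0. \<forall>h\<in>l1_space. l1norm h < d \<longrightarrow> norm (R' h) \<le> e * l1norm h"
    using d assms(2,3) by (intro exI[of _ "min d d0"]) auto
qed

lemma small_add: "small R \<Longrightarrow> small S \<Longrightarrow> small (\<lambda>h. R h + S h)"
  unfolding small_def
proof (intro allI impI)
  fix e :: real assume a: "\<forall>e>0. \<exists>d>0. \<forall>h\<in>l1_space. l1norm h < d \<longrightarrow> norm (R h) \<le> e * l1norm h"
    "\<forall>e>0. \<exists>d>0. \<forall>h\<in>l1_space. l1norm h < d \<longrightarrow> norm (S h) \<le> e * l1norm h" "e > 0"
  obtain d1 where d1: "d1 > 0" "\<forall>h\<in>l1_space. l1norm h < d1 \<longrightarrow> norm (R h) \<le> (e/2) * l1norm h"
    using a(1) half_gt_zero[OF a(3)] by blast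
  obtain d2 where d2: "d2 > 0" "\<forall>h\<in>l1_space. l1norm h < d2 \<longrightarrow> norm (S h) \<le> (e/2) * l1norm h"
    using a(2) half_gt_zero[OF a(3)] by blast
  show "\<exists>d>0. \<forall>h\<in>l1_space. l1norm h < d \<longrightarrow> norm (R h + S h) \<le> e * l1norm h"
  proof (intro exI[of _ "min d1 d2"] conjI ballI impI)
    fix h assume h: "h \<in> l1_space" "l1norm h < min d1 d2"
    have "norm (R h + S h) \<le> norm (R h) + norm (S h)" by (rule norm_triangle_ineq)
    also have "\<dots> \<le> (e/2) * l1norm h + (e/2) * l1norm h" using d1 d2 h by (intro add_mono) auto
    finally show "norm (R h + S h) \<le> e * l1norm h" by simp
  qed (use d1 d2 in auto)
qed

lemma small_bmult: assumes "bnd0 B" "small R" shows "small (\<lambda>h. B h * R h)"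
  unfolding small_def
proof (intro allI impI)
  fix e :: real assume e: "e > 0"
  obtain d0 M where dM: "d0 > 0" "\<forall>h\<in>l1_space. l1norm h < d0 \<longrightarrow> norm (B h) \<le> M"
    using assms(1) unfolding bnd0_def by blast
  have "norm (B 0) \<le> M" using dM(2) dM(1) l1_zero by simp
  hence M0: "M \<ge> 0" using norm_ge_zero[of "B 0"] by linarith
  obtain d1 where d1: "d1 > 0" "\<forall>h\<in>l1_space. l1norm h < d1 \<longrightarrow> norm (R h) \<le> (e/(M+1)) * l1norm h"
  proof -
    have "e/(M+1) > 0" using e M0 by simp
    thus ?thesis using assms(2) that unfolding small_def by blast
  qed
  show "\<exists>d>0. \<forall>h\<in>l1_space. l1norm h < d \<longrightarrow> norm (B h * R h) \<le> e * l1norm h"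
  proof (intro exI[of _ "min d0 d1"] conjI ballI impI)
    fix h assume h: "h \<in> l1_space" "l1norm h < min d0 d1"
    have "norm (B h * R h) = norm (B h) * norm (R h)" by (simp add: norm_mult)
    also have "\<dots> \<le> M * ((e/(M+1)) * l1norm h)"
      using dM d1 h M0 by (intro mult_mono) auto
    also have "\<dots> \<le> (M+1) * ((e/(M+1)) * l1norm h)"
      using M0 e l1norm_nonneg[OF h(1)] by (intro mult_right_mono) auto
    also have "\<dots> = e * l1norm h" using M0 by simp
    finally show "norm (B h * R h) \<le> e * l1norm h" .
  qed (use dM d1 in auto)
qed

lemma bnd0_const: "bnd0 (\<lambda>h. c)"
  unfolding bnd0_def by (intro exI[of _ 1]) auto

lemma small_cmult: "small R \<Longrightarrow> small (\<lambda>h. c * R h)"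
  using small_bmult[OF bnd0_const] .

lemma lip_lip_small: assumes "lip0 P" "lip0 Q" shows "small (\<lambda>h. P h * Q h)"
  unfolding small_def
proof (intro allI impI)
  fix e :: real assume e: "e > 0"
  obtain d1 C1 where 1: "d1 > 0" "\<forall>h\<in>l1_space. l1norm h < d1 \<longrightarrow> norm (P h) \<le> C1 * l1norm h"
    using assms(1) unfolding lip0_def by blast
  obtain d2 C2 where 2: "d2 > 0" "\<forall>h\<in>l1_space. l1norm h < d2 \<longrightarrow> norm (Q h) \<le> C2 * l1norm h"
    using assms(2) unfolding lip0_def by blast
  define K where "K = \<bar>C1\<bar> * \<bar>C2\<bar> + 1"
  have K: "K > 0" unfolding K_def by (simp add: add_nonneg_pos)
  show "\<exists>d>0. \<forall>h\<in>l1_space. l1norm h < d \<longrightarrow> norm (P h * Q h) \<le> e * l1norm h"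
  proof (intro exI[of _ "min (min d1 d2) (e / K)"] conjI ballI impI)
    fix h assume h: "h \<in> l1_space" "l1norm h < min (min d1 d2) (e / K)"
    have n: "0 \<le> l1norm h" using l1norm_nonneg h(1) .
    have "norm (P h * Q h) = norm (P h) * norm (Q h)" by (simp add: norm_mult)
    also have "\<dots> \<le> (\<bar>C1\<bar> * l1norm h) * (\<bar>C2\<bar> * l1norm h)"
    proof (intro mult_mono)
      have "norm (P h) \<le> C1 * l1norm h" using 1 h by auto
      also have "\<dots> \<le> \<bar>C1\<bar> * l1norm h" using n by (intro mult_right_mono) auto
      finally show "norm (P h) \<le> \<bar>C1\<bar> * l1norm h" .
      have "norm (Q h) \<le> C2 * l1norm h" using 2 h by auto
      also have "\<dots> \<le> \<bar>C2\<bar> * l1norm h" using n by (intro mult_right_mono) auto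
      finally show "norm (Q h) \<le> \<bar>C2\<bar> * l1norm h" .
    qed (use n in auto)
    also have "\<dots> = (\<bar>C1\<bar> * \<bar>C2\<bar> * l1norm h) * l1norm h" by (simp add: algebra_simps)
    also have "\<dots> \<le> (K * l1norm h) * l1norm h"
      using n unfolding K_def by (intro mult_right_mono) (auto simp: algebra_simps)
    also have "\<dots> \<le> e * l1norm h"
    proof -
      have "K * l1norm h \<le> e" using h(2) K by (simp add: field_simps)
      thus ?thesis using n by (intro mult_right_mono)
    qed
    finally show "norm (P h * Q h) \<le> e * l1norm h" .
  qed (use 1 2 K e in auto)
qed

lemma small_lip: "small R \<Longrightarrow> lip0 R"
  unfolding small_def lip0_def using zero_less_one by blast

lemma lip_add: assumes "lip0 P" "lip0 Q" shows "lip0 (\<lambda>h. P h + Q h)"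
proof -
  obtain d1 C1 where 1: "d1 > 0" "\<forall>h\<in>l1_space. l1norm h < d1 \<longrightarrow> norm (P h) \<le> C1 * l1norm h"
    using assms(1) unfolding lip0_def by blast
  obtain d2 C2 where 2: "d2 > 0" "\<forall>h\<in>l1_space. l1norm h < d2 \<longrightarrow> norm (Q h) \<le> C2 * l1norm h"
    using assms(2) unfolding lip0_def by blast
  have "\<forall>h\<in>l1_space. l1norm h < min d1 d2 \<longrightarrow> norm (P h + Q h) \<le> (C1 + C2) * l1norm h"
  proof (intro ballI impI)
    fix h assume h: "h \<in> l1_space" "l1norm h < min d1 d2"
    have "norm (P h + Q h) \<le> norm (P h) + norm (Q h)" by (rule norm_triangle_ineq)
    also have "\<dots> \<le> C1 * l1norm h + C2 * l1norm h" using 1 2 h by (intro add_mono) auto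
    finally show "norm (P h + Q h) \<le> (C1 + C2) * l1norm h" by (simp add: algebra_simps)
  qed
  moreover have "min d1 d2 > 0" using 1 2 by simp
  ultimately show ?thesis unfolding lip0_def by blast
qed

lemma lip_bnd: assumes "lip0 P" shows "bnd0 P"
proof -
  obtain d1 C1 where 1: "d1 > 0" "\<forall>h\<in>l1_space. l1norm h < d1 \<longrightarrow> norm (P h) \<le> C1 * l1norm h"
    using assms(1) unfolding lip0_def by blast
  have "\<forall>h\<in>l1_space. l1norm h < d1 \<longrightarrow> norm (P h) \<le> \<bar>C1\<bar> * d1"
  proof (intro ballI impI)
    fix h assume h: "h \<in> l1_space" "l1norm h < d1"
    have "norm (P h) \<le> C1 * l1norm h" using 1 h by auto
    also have "\<dots> \<le> \<bar>C1\<bar> * l1norm h" using l1norm_nonneg[OF h(1)] by (intro mult_right_mono) auto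
    also have "\<dots> \<le> \<bar>C1\<bar> * d1" using h by (intro mult_left_mono) auto
    finally show "norm (P h) \<le> \<bar>C1\<bar> * d1" .
  qed
  thus ?thesis using 1 unfolding bnd0_def by blast
qed

lemma bnd0_add: assumes "bnd0 P" "bnd0 Q" shows "bnd0 (\<lambda>h. P h + Q h)"
proof -
  obtain d1 C1 where 1: "d1 > 0" "\<forall>h\<in>l1_space. l1norm h < d1 \<longrightarrow> norm (P h) \<le> C1"
    using assms(1) unfolding bnd0_def by blast
  obtain d2 C2 where 2: "d2 > 0" "\<forall>h\<in>l1_space. l1norm h < d2 \<longrightarrow> norm (Q h) \<le> C2"
    using assms(2) unfolding bnd0_def by blast
  have "\<forall>h\<in>l1_space. l1norm h < min d1 d2 \<longrightarrow> norm (P h + Q h) \<le> C1 + C2"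
    using 1 2 by (auto intro: order_trans[OF norm_triangle_ineq add_mono])
  moreover have "min d1 d2 > 0" using 1 2 by simp
  ultimately show ?thesis unfolding bnd0_def by blast
qed

lemma bnd0_mult: assumes "bnd0 P" "bnd0 Q" shows "bnd0 (\<lambda>h. P h * Q h)"
proof -
  obtain d1 C1 where 1: "d1 > 0" "\<forall>h\<in>l1_space. l1norm h < d1 \<longrightarrow> norm (P h) \<le> C1"
    using assms(1) unfolding bnd0_def by blast
  obtain d2 C2 where 2: "d2 > 0" "\<forall>h\<in>l1_space. l1norm h < d2 \<longrightarrow> norm (Q h) \<le> C2"
    using assms(2) unfolding bnd0_def by blast
  have "\<forall>h\<in>l1_space. l1norm h < min d1 d2 \<longrightarrow> norm (P h * Q h) \<le> C1 * C2"
    using 1 2 by (auto simp: norm_mult intro: mult_mono order_trans[OF norm_ge_zero])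
  moreover have "min d1 d2 > 0" using 1 2 by simp
  ultimately show ?thesis unfolding bnd0_def by blast
qed

section \<open>Dual\<close>

lemma dual_lin: "D \<in> l1_dual \<Longrightarrow> x \<in> l1_space \<Longrightarrow> y \<in> l1_space \<Longrightarrow> D (x + y) = D x + D y"
  unfolding l1_dual_def by blast

lemma dual_scl: "D \<in> l1_dual \<Longrightarrow> x \<in> l1_space \<Longrightarrow> D (scl c x) = c * D x"
  unfolding l1_dual_def by blast

lemma dual_bound: "D \<in> l1_dual \<Longrightarrow> \<exists>C\<ge>0. \<forall>x\<in>l1_space. norm (D x) \<le> C * l1norm x"
proof -
  assume "D \<in> l1_dual"
  then obtain C where C: "\<forall>x\<in>l1_space. norm (D x) \<le> C * l1norm x" unfolding l1_dual_def by blast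
  show ?thesis
  proof (intro exI[of _ "\<bar>C\<bar>"] conjI ballI)
    fix x assume x: "x \<in> l1_space"
    show "norm (D x) \<le> \<bar>C\<bar> * l1norm x"
      using C x l1norm_nonneg[OF x] by (auto intro: order_trans[OF _ mult_right_mono[OF abs_ge_self]])
  qed simp
qed

lemma dual_lip: "D \<in> l1_dual \<Longrightarrow> lip0 D"
  using dual_bound unfolding lip0_def using zero_less_one by blast

lemma scl_minus1: "scl (-1) x = - x" unfolding scl_def by auto

lemma dual_diff: "D \<in> l1_dual \<Longrightarrow> x \<in> l1_space \<Longrightarrow> y \<in> l1_space \<Longrightarrow> D (x - y) = D x - D y"
proof -
  assume a: "D \<in> l1_dual" "x \<in> l1_space" "y \<in> l1_space"
  have "D (- y) = - D y" using dual_scl[OF a(1) a(3), of "-1"] by (simp add: scl_minus1)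
  moreover have "D (x + - y) = D x + D (- y)" using dual_lin[OF a(1) a(2) l1_uminus[OF a(3)]] .
  ultimately show ?thesis by (metis diff_conv_add_uminus)
qed

lemma dual_comb: assumes "D \<in> l1_dual" "E \<in> l1_dual" shows "(\<lambda>h. a * D h + b * E h) \<in> l1_dual"
proof -
  obtain C1 where C1: "C1 \<ge> 0" "\<forall>x\<in>l1_space. norm (D x) \<le> C1 * l1norm x" using dual_bound[OF assms(1)] by blast
  obtain C2 where C2: "C2 \<ge> 0" "\<forall>x\<in>l1_space. norm (E x) \<le> C2 * l1norm x" using dual_bound[OF assms(2)] by blast
  have b: "\<forall>x\<in>l1_space. norm (a * D x + b * E x) \<le> (norm a * C1 + norm b * C2) * l1norm x"
  proof
    fix x assume x: "x \<in> l1_space"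
    have "norm (a * D x + b * E x) \<le> norm a * norm (D x) + norm b * norm (E x)"
      by (metis norm_mult norm_triangle_ineq)
    also have "\<dots> \<le> norm a * (C1 * l1norm x) + norm b * (C2 * l1norm x)"
      using C1 C2 x by (intro add_mono mult_left_mono) auto
    finally show "norm (a * D x + b * E x) \<le> (norm a * C1 + norm b * C2) * l1norm x" by (simp add: algebra_simps)
  qed
  show ?thesis unfolding l1_dual_def
    using dual_lin[OF assms(1)] dual_lin[OF assms(2)] dual_scl[OF assms(1)] dual_scl[OF assms(2)] b
    by (auto simp: algebra_simps intro!: exI[of _ "norm a * C1 + norm b * C2"])
qed

lemma dual_zero: "(\<lambda>h. 0) \<in> l1_dual"
  unfolding l1_dual_def by (auto intro!: exI[of _ 0])



definition hol_at :: "(l1 \<Rightarrow> complex) \<Rightarrow> l1 \<Rightarrow> bool" where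
  "hol_at F a \<longleftrightarrow> (\<exists>D\<in>l1_dual. small (\<lambda>h. F (a + h) - F a - D h))"

lemma small_zero: "small (\<lambda>h. 0)"
  unfolding small_def using l1norm_nonneg by (auto intro: exI[of _ 1])

lemma hol_lip: assumes "hol_at F a" shows "lip0 (\<lambda>h. F (a + h) - F a)"
proof -
  obtain D where D: "D \<in> l1_dual" "small (\<lambda>h. F (a + h) - F a - D h)" using assms unfolding hol_at_def by blast
  have "lip0 (\<lambda>h. (F (a + h) - F a - D h) + D h)" by (rule lip_add[OF small_lip[OF D(2)] dual_lip[OF D(1)]])
  thus ?thesis by simp
qed

lemma hol_bnd: assumes "hol_at F a" shows "bnd0 (\<lambda>h. F (a + h))"
proof -
  have "bnd0 (\<lambda>h. F a + (F (a + h) - F a))" by (rule bnd0_add[OF bnd0_const lip_bnd[OF hol_lip[OF assms]]])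
  thus ?thesis by simp
qed

lemma hol_const: "hol_at (\<lambda>y. c) a"
  unfolding hol_at_def using dual_zero small_zero by (intro bexI[of _ "\<lambda>h. 0"]) auto

lemma hol_dual: assumes "L \<in> l1_dual" "a \<in> l1_space" shows "hol_at L a"
  unfolding hol_at_def
proof (intro bexI[OF _ assms(1)])
  show "small (\<lambda>h. L (a + h) - L a - L h)"
    by (rule small_cong[OF small_zero zero_less_one]) (use dual_lin[OF assms(1) assms(2)] in auto)
qed

lemma hol_add: assumes "hol_at F a" "hol_at G a" shows "hol_at (\<lambda>y. F y + G y) a"
proof -
  obtain D where D: "D \<in> l1_dual" "small (\<lambda>h. F (a + h) - F a - D h)" using assms(1) unfolding hol_at_def by blast
  obtain E where E: "E \<in> l1_dual" "small (\<lambda>h. G (a + h) - G a - E h)" using assms(2) unfolding hol_at_def by blast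
  have "(\<lambda>h. 1 * D h + 1 * E h) \<in> l1_dual" by (rule dual_comb[OF D(1) E(1)])
  moreover have "small (\<lambda>h. (F (a + h) - F a - D h) + (G (a + h) - G a - E h))" by (rule small_add[OF D(2) E(2)])
  ultimately show ?thesis unfolding hol_at_def
    by (intro bexI[of _ "\<lambda>h. 1 * D h + 1 * E h"]) (auto simp: algebra_simps)
qed

lemma hol_cmult: assumes "hol_at F a" shows "hol_at (\<lambda>y. c * F y) a"
proof -
  obtain D where D: "D \<in> l1_dual" "small (\<lambda>h. F (a + h) - F a - D h)" using assms(1) unfolding hol_at_def by blast
  have "(\<lambda>h. c * D h + 0 * D h) \<in> l1_dual" by (rule dual_comb[OF D(1) D(1)])
  moreover have "small (\<lambda>h. c * (F (a + h) - F a - D h))" by (rule small_cmult[OF D(2)])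
  ultimately show ?thesis unfolding hol_at_def
    by (intro bexI[of _ "\<lambda>h. c * D h + 0 * D h"]) (auto simp: algebra_simps)
qed

lemma hol_mult: assumes "hol_at F a" "hol_at G a" shows "hol_at (\<lambda>y. F y * G y) a"
proof -
  obtain D where D: "D \<in> l1_dual" "small (\<lambda>h. F (a + h) - F a - D h)" using assms(1) unfolding hol_at_def by blast
  obtain E where E: "E \<in> l1_dual" "small (\<lambda>h. G (a + h) - G a - E h)" using assms(2) unfolding hol_at_def by blast
  have "(\<lambda>h. F a * E h + G a * D h) \<in> l1_dual" by (rule dual_comb[OF E(1) D(1)])
  moreover
  have s1: "small (\<lambda>h. G (a + h) * (F (a + h) - F a - D h))" by (rule small_bmult[OF hol_bnd[OF assms(2)] D(2)])
  have s2: "small (\<lambda>h. D h * (G (a + h) - G a))" by (rule lip_lip_small[OF dual_lip[OF D(1)] hol_lip[OF assms(2)]])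
  have s3: "small (\<lambda>h. F a * (G (a + h) - G a - E h))" by (rule small_cmult[OF E(2)])
  have "small (\<lambda>h. (G (a + h) * (F (a + h) - F a - D h) + D h * (G (a + h) - G a)) + F a * (G (a + h) - G a - E h))"
    by (rule small_add[OF small_add[OF s1 s2] s3])
  moreover have "(\<lambda>h. (G (a + h) * (F (a + h) - F a - D h) + D h * (G (a + h) - G a)) + F a * (G (a + h) - G a - E h))
     = (\<lambda>h. F (a + h) * G (a + h) - F a * G a - (F a * E h + G a * D h))"
    by (auto simp: algebra_simps)
  ultimately show ?thesis unfolding hol_at_def by auto
qed

lemma hol_inv: assumes "hol_at F a" "F a \<noteq> 0" shows "hol_at (\<lambda>y. 1 / F y) a"
proof -
  obtain D where D: "D \<in> l1_dual" "small (\<lambda>h. F (a + h) - F a - D h)" using assms(1) unfolding hol_at_def by blast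
  obtain d C where dC: "d > 0" "\<forall>h\<in>l1_space. l1norm h < d \<longrightarrow> norm (F (a + h) - F a) \<le> C * l1norm h"
    using hol_lip[OF assms(1)] unfolding lip0_def by blast
  define m where "m = norm (F a)"
  have m: "m > 0" using assms(2) unfolding m_def by simp
  define d0 where "d0 = min d (m / (2 * (\<bar>C\<bar> + 1)))"
  have d0: "d0 > 0" using dC m unfolding d0_def by (simp add: add_nonneg_pos)
  have lower: "norm (F (a + h)) \<ge> m / 2" if h: "h \<in> l1_space" "l1norm h < d0" for h
  proof -
    have n: "0 \<le> l1norm h" using l1norm_nonneg h(1) .
    have "norm (F (a + h) - F a) \<le> C * l1norm h" using dC h unfolding d0_def by auto
    also have "\<dots> \<le> (\<bar>C\<bar> + 1) * l1norm h" using n by (intro mult_right_mono) auto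
    also have "\<dots> \<le> (\<bar>C\<bar> + 1) * (m / (2 * (\<bar>C\<bar> + 1)))"
      using h(2) unfolding d0_def by (intro mult_left_mono) auto
    also have "\<dots> = m / 2" by (simp add: field_simps add_nonneg_pos)
    finally have "norm (F (a + h) - F a) \<le> m / 2" .
    moreover have "m \<le> norm (F (a + h)) + norm (F (a + h) - F a)"
      unfolding m_def by (metis norm_minus_commute norm_triangle_sub)
    ultimately show ?thesis by linarith
  qed
  have bi: "bnd0 (\<lambda>h. 1 / F (a + h))"
    unfolding bnd0_def
  proof (rule exI[of _ d0], rule conjI[OF d0], rule exI[of _ "2 / m"], intro ballI impI)
    fix h assume h: "h \<in> l1_space" "l1norm h < d0"
    have l: "norm (F (a + h)) \<ge> m / 2" using lower h .
    have p: "norm (F (a + h)) > 0" using l m by linarith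
    have "1 / norm (F (a + h)) \<le> 1 / (m / 2)" using l m p by (intro divide_left_mono) auto
    thus "norm (1 / F (a + h)) \<le> 2 / m" by (simp add: norm_divide)
  qed
  have dl: "(\<lambda>h. (- 1 / (F a * F a)) * D h + 0 * D h) \<in> l1_dual" by (rule dual_comb[OF D(1) D(1)])
  have s1: "small (\<lambda>h. (- 1 / F a) * (F (a + h) - F a - D h))" by (rule small_cmult[OF D(2)])
  have s2: "small (\<lambda>h. (1 / (F a * F a)) * (D h * (F (a + h) - F a)))"
    by (rule small_cmult[OF lip_lip_small[OF dual_lip[OF D(1)] hol_lip[OF assms(1)]]])
  have s: "small (\<lambda>h. 1 / F (a + h) * ((- 1 / F a) * (F (a + h) - F a - D h) + (1 / (F a * F a)) * (D h * (F (a + h) - F a))))"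
    by (rule small_bmult[OF bi small_add[OF s1 s2]])
  have "small (\<lambda>h. 1 / F (a + h) - 1 / F a - ((- 1 / (F a * F a)) * D h + 0 * D h))"
  proof (rule small_cong[OF s d0])
    fix h assume h: "h \<in> l1_space" "l1norm h < d0"
    have nz: "F (a + h) \<noteq> 0" using lower[OF h] m by auto
    show "1 / F (a + h) - 1 / F a - ((- 1 / (F a * F a)) * D h + 0 * D h) =
      1 / F (a + h) * ((- 1 / F a) * (F (a + h) - F a - D h) + (1 / (F a * F a)) * (D h * (F (a + h) - F a)))"
      using nz assms(2) by (simp add: field_simps)
  qed
  thus ?thesis using dl unfolding hol_at_def by (intro bexI[OF _ dl]) simp
qed

lemma hol_local: assumes "hol_at F a" "a \<in> l1_ball" "\<And>y. y \<in> l1_ball \<Longrightarrow> G y = F y"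
  shows "hol_at G a"
proof -
  obtain D where D: "D \<in> l1_dual" "small (\<lambda>h. F (a + h) - F a - D h)" using assms(1) unfolding hol_at_def by blast
  have pos: "1 - l1norm a > 0" using assms(2) unfolding l1_ball_def by auto
  have "small (\<lambda>h. G (a + h) - G a - D h)"
    by (rule small_cong[OF D(2) pos]) (use assms(2,3) ball_near in auto)
  thus ?thesis using D(1) unfolding hol_at_def by blast
qed



lemma cont_const: "cont_on_l1 S (\<lambda>y. c)"
  unfolding cont_on_l1_def by (auto intro: exI[of _ 1])

lemma cont_add: assumes "cont_on_l1 S F" "cont_on_l1 S G" shows "cont_on_l1 S (\<lambda>y. F y + G y)"
  unfolding cont_on_l1_def
proof (intro ballI allI impI)
  fix a e assume a: "a \<in> S" and e: "(e::real) > 0"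
  obtain d1 where d1: "d1 > 0" "\<forall>y\<in>S. l1norm (y - a) < d1 \<longrightarrow> norm (F y - F a) < e/2"
    using assms(1) a half_gt_zero[OF e] unfolding cont_on_l1_def by blast
  obtain d2 where d2: "d2 > 0" "\<forall>y\<in>S. l1norm (y - a) < d2 \<longrightarrow> norm (G y - G a) < e/2"
    using assms(2) a half_gt_zero[OF e] unfolding cont_on_l1_def by blast
  have "\<forall>y\<in>S. l1norm (y - a) < min d1 d2 \<longrightarrow> norm (F y + G y - (F a + G a)) < e"
  proof (intro ballI impI)
    fix y assume y: "y \<in> S" "l1norm (y - a) < min d1 d2"
    have "norm (F y + G y - (F a + G a)) \<le> norm (F y - F a) + norm (G y - G a)"
      by (metis add_diff_add norm_triangle_ineq)
    also have "\<dots> < e/2 + e/2" using d1 d2 y by (intro add_strict_mono) auto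
    finally show "norm (F y + G y - (F a + G a)) < e" by simp
  qed
  moreover have "min d1 d2 > 0" using d1 d2 by simp
  ultimately show "\<exists>d>0. \<forall>y\<in>S. l1norm (y - a) < d \<longrightarrow> norm (F y + G y - (F a + G a)) < e" by blast
qed

lemma cont_mult: assumes "cont_on_l1 S F" "cont_on_l1 S G" shows "cont_on_l1 S (\<lambda>y. F y * G y)"
  unfolding cont_on_l1_def
proof (intro ballI allI impI)
  fix a e assume a: "a \<in> S" and e: "(e::real) > 0"
  define e1 where "e1 = e / (2 * (norm (G a) + 1))"
  define e2 where "e2 = min 1 (e / (2 * (norm (F a) + 1)))"
  have e1: "e1 > 0" unfolding e1_def using e by (simp add: add_nonneg_pos)
  have e2: "e2 > 0" unfolding e2_def using e by (simp add: add_nonneg_pos)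
  obtain d1 where d1: "d1 > 0" "\<forall>y\<in>S. l1norm (y - a) < d1 \<longrightarrow> norm (F y - F a) < e1"
    using assms(1) a e1 unfolding cont_on_l1_def by blast
  obtain d2 where d2: "d2 > 0" "\<forall>y\<in>S. l1norm (y - a) < d2 \<longrightarrow> norm (G y - G a) < e2"
    using assms(2) a e2 unfolding cont_on_l1_def by blast
  have "\<forall>y\<in>S. l1norm (y - a) < min d1 d2 \<longrightarrow> norm (F y * G y - F a * G a) < e"
  proof (intro ballI impI)
    fix y assume y: "y \<in> S" "l1norm (y - a) < min d1 d2"
    have f: "norm (F y - F a) < e1" and g: "norm (G y - G a) < e2" using d1 d2 y by auto
    have gy: "norm (G y) \<le> norm (G a) + 1"
    proof -
      have "norm (G y) \<le> norm (G a) + norm (G y - G a)" using norm_triangle_ineq[of "G a" "G y - G a"] by simp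
      moreover have "e2 \<le> 1" unfolding e2_def by simp
      ultimately show ?thesis using g by linarith
    qed
    have eq: "F y * G y - F a * G a = (F y - F a) * G y + F a * (G y - G a)" by (simp add: algebra_simps)
    have "norm (F y * G y - F a * G a) \<le> norm (F y - F a) * norm (G y) + norm (F a) * norm (G y - G a)"
      unfolding eq by (metis norm_mult norm_triangle_ineq)
    also have "\<dots> \<le> e1 * (norm (G a) + 1) + norm (F a) * e2"
      using f g gy e1 e2 by (intro add_mono mult_mono mult_left_mono) auto
    also have "e1 * (norm (G a) + 1) = e / 2"
    proof -
      obtain N where N: "N = norm (G a) + 1" by blast
      have "N > 0" unfolding N by (simp add: add_nonneg_pos)
      hence "e / (2 * N) * N = e / 2" by (simp add: field_simps)
      thus ?thesis unfolding e1_def N .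
    qed
    also have "norm (F a) * e2 < e / 2"
    proof -
      have "norm (F a) * e2 \<le> norm (F a) * (e / (2 * (norm (F a) + 1)))"
        unfolding e2_def by (intro mult_left_mono) auto
      also have "\<dots> < e / 2"
      proof -
        obtain N where N: "N = norm (F a) + 1" by blast
        have Np: "N > 0" unfolding N by (simp add: add_nonneg_pos)
        have x: "e / (2 * N) > 0" using Np e by simp
        have "norm (F a) * (e / (2 * N)) < N * (e / (2 * N))" using x unfolding N by (intro mult_strict_right_mono) auto
        also have "N * (e / (2 * N)) = e / 2" using Np by simp
        finally show ?thesis unfolding N .
      qed
      finally show ?thesis .
    qed
    finally show "norm (F y * G y - F a * G a) < e" by simp
  qed
  moreover have "min d1 d2 > 0" using d1 d2 by simp
  ultimately show "\<exists>d>0. \<forall>y\<in>S. l1norm (y - a) < d \<longrightarrow> norm (F y * G y - F a * G a) < e" by blast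
qed

lemma cont_cmult: "cont_on_l1 S F \<Longrightarrow> cont_on_l1 S (\<lambda>y. c * F y)"
  using cont_mult[OF cont_const] .

lemma cont_dual: assumes "L \<in> l1_dual" "S \<subseteq> l1_space" shows "cont_on_l1 S L"
  unfolding cont_on_l1_def
proof (intro ballI allI impI)
  fix a e assume a: "a \<in> S" and e: "(e::real) > 0"
  obtain C where C: "C \<ge> 0" "\<forall>x\<in>l1_space. norm (L x) \<le> C * l1norm x" using dual_bound[OF assms(1)] by blast
  have "\<forall>y\<in>S. l1norm (y - a) < e / (C + 1) \<longrightarrow> norm (L y - L a) < e"
  proof (intro ballI impI)
    fix y assume y: "y \<in> S" "l1norm (y - a) < e / (C + 1)"
    have sp: "y - a \<in> l1_space" using y a assms(2) l1_diff by auto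
    have ys: "y \<in> l1_space" "a \<in> l1_space" using y a assms(2) by blast+
    have "norm (L y - L a) = norm (L (y - a))" using dual_diff[OF assms(1) ys] by simp
    also have "\<dots> \<le> C * l1norm (y - a)" using C sp by auto
    also have "\<dots> \<le> (C + 1) * l1norm (y - a)" using l1norm_nonneg[OF sp] by (intro mult_right_mono) auto
    also have "\<dots> < (C + 1) * (e / (C + 1))" using y C by (intro mult_strict_left_mono) auto
    also have "\<dots> = e" using C by simp
    finally show "norm (L y - L a) < e" .
  qed
  moreover have "e / (C + 1) > 0" using e C by simp
  ultimately show "\<exists>d>0. \<forall>y\<in>S. l1norm (y - a) < d \<longrightarrow> norm (L y - L a) < e" by blast
qed

lemma cont_inv: assumes "cont_on_l1 S F" "m > 0" "\<And>y. y \<in> S \<Longrightarrow> m \<le> norm (F y)"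
  shows "cont_on_l1 S (\<lambda>y. 1 / F y)"
  unfolding cont_on_l1_def
proof (intro ballI allI impI)
  fix a e assume a: "a \<in> S" and e: "(e::real) > 0"
  have em: "e * (m * m) > 0" using e assms(2) by simp
  obtain d where d: "d > 0" "\<forall>y\<in>S. l1norm (y - a) < d \<longrightarrow> norm (F y - F a) < e * (m * m)"
    using assms(1) a em unfolding cont_on_l1_def by blast
  have "\<forall>y\<in>S. l1norm (y - a) < d \<longrightarrow> norm (1 / F y - 1 / F a) < e"
  proof (intro ballI impI)
    fix y assume y: "y \<in> S" "l1norm (y - a) < d"
    have my: "m \<le> norm (F y)" and ma: "m \<le> norm (F a)" using assms(3) y a by auto
    have nz: "F y \<noteq> 0" "F a \<noteq> 0" using my ma assms(2) by auto
    have "1 / F y - 1 / F a = (F a - F y) / (F y * F a)" using nz by (simp add: field_simps)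
    hence "norm (1 / F y - 1 / F a) = norm (F y - F a) / (norm (F y) * norm (F a))"
      by (simp add: norm_divide norm_mult norm_minus_commute)
    also have "\<dots> \<le> norm (F y - F a) / (m * m)"
    proof -
      have p: "norm (F y) > 0" "norm (F a) > 0" using my ma assms(2) by linarith+
      show ?thesis using my ma assms(2) p by (intro divide_left_mono mult_mono) auto
    qed
    also have "\<dots> < e" using d y em assms(2) by (simp add: divide_less_eq)
    finally show "norm (1 / F y - 1 / F a) < e" .
  qed
  thus "\<exists>d>0. \<forall>y\<in>S. l1norm (y - a) < d \<longrightarrow> norm (1 / F y - 1 / F a) < e" using d(1) by blast
qed

definition nice :: "(l1 \<Rightarrow> complex) \<Rightarrow> bool" where
  "nice F \<longleftrightarrow> (\<forall>a\<in>l1_ball. hol_at F a) \<and> cont_on_l1 l1_cball F \<and> (\<exists>C. \<forall>y\<in>l1_ball. norm (F y) \<le> C)"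

lemma nice_const: "nice (\<lambda>y. c)"
  unfolding nice_def using hol_const cont_const by auto

lemma nice_add: assumes "nice F" "nice G" shows "nice (\<lambda>y. F y + G y)"
proof -
  obtain C1 where 1: "\<forall>y\<in>l1_ball. norm (F y) \<le> C1" using assms(1) unfolding nice_def by blast
  obtain C2 where 2: "\<forall>y\<in>l1_ball. norm (G y) \<le> C2" using assms(2) unfolding nice_def by blast
  have "\<forall>y\<in>l1_ball. norm (F y + G y) \<le> C1 + C2"
  proof
    fix y assume y: "y \<in> l1_ball"
    have "norm (F y + G y) \<le> norm (F y) + norm (G y)" by (rule norm_triangle_ineq)
    thus "norm (F y + G y) \<le> C1 + C2" using 1 2 y by fastforce
  qed
  thus ?thesis using assms unfolding nice_def by (simp add: hol_add cont_add) blast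
qed

lemma nice_mult: assumes "nice F" "nice G" shows "nice (\<lambda>y. F y * G y)"
proof -
  obtain C1 where 1: "\<forall>y\<in>l1_ball. norm (F y) \<le> C1" using assms(1) unfolding nice_def by blast
  obtain C2 where 2: "\<forall>y\<in>l1_ball. norm (G y) \<le> C2" using assms(2) unfolding nice_def by blast
  have "\<forall>y\<in>l1_ball. norm (F y * G y) \<le> C1 * C2"
  proof
    fix y assume y: "y \<in> l1_ball"
    have "norm (F y) * norm (G y) \<le> C1 * C2" using 1 2 y by (intro mult_mono) (auto intro: order_trans[OF norm_ge_zero])
    thus "norm (F y * G y) \<le> C1 * C2" by (simp add: norm_mult)
  qed
  thus ?thesis using assms unfolding nice_def by (simp add: hol_mult cont_mult) blast
qed

lemma nice_cmult: "nice F \<Longrightarrow> nice (\<lambda>y. c * F y)"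
  using nice_mult[OF nice_const] .

lemma nice_dual: assumes "L \<in> l1_dual" shows "nice L"
proof -
  obtain C where C: "C \<ge> 0" "\<forall>x\<in>l1_space. norm (L x) \<le> C * l1norm x" using dual_bound[OF assms(1)] by blast
  have "\<forall>y\<in>l1_ball. norm (L y) \<le> C"
  proof
    fix y assume y: "y \<in> l1_ball"
    have "norm (L y) \<le> C * l1norm y" using C y ball_space by auto
    also have "\<dots> \<le> C * 1" using y C unfolding l1_ball_def by (intro mult_left_mono) auto
    finally show "norm (L y) \<le> C" by simp
  qed
  moreover have "cont_on_l1 l1_cball L" by (rule cont_dual[OF assms]) (auto simp: l1_cball_def)
  ultimately show ?thesis unfolding nice_def using hol_dual[OF assms] ball_space by auto
qed

lemma nice_inv: assumes "nice F" "m > 0" "\<And>y. y \<in> l1_cball \<Longrightarrow> m \<le> norm (F y)"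
  shows "nice (\<lambda>y. 1 / F y)"
proof -
  have b: "\<forall>y\<in>l1_ball. norm (1 / F y) \<le> 1 / m"
  proof
    fix y assume "y \<in> l1_ball"
    hence "y \<in> l1_cball" using ball_sub_cball by blast
    hence my: "m \<le> norm (F y)" using assms(3) by blast
    have "0 < norm (F y)" using my assms(2) by linarith
    hence "0 < norm (F y) * m" using assms(2) by (rule mult_pos_pos)
    hence "1 / norm (F y) \<le> 1 / m" using assms(2) my by (intro divide_left_mono) auto
    thus "norm (1 / F y) \<le> 1 / m" by (simp add: norm_divide)
  qed
  have h: "\<forall>a\<in>l1_ball. hol_at (\<lambda>y. 1 / F y) a"
  proof
    fix a assume a: "a \<in> l1_ball"
    hence "a \<in> l1_cball" using ball_sub_cball by blast
    hence "m \<le> norm (F a)" using assms(3) by blast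
    hence nz: "F a \<noteq> 0" using assms(2) by auto
    have "hol_at F a" using assms(1) a unfolding nice_def by blast
    thus "hol_at (\<lambda>y. 1 / F y) a" using hol_inv nz by blast
  qed
  have c: "cont_on_l1 l1_cball (\<lambda>y. 1 / F y)"
    using cont_inv[of l1_cball F m] assms unfolding nice_def by blast
  show ?thesis unfolding nice_def using b h c by blast
qed

lemma nice_sum: "finite I \<Longrightarrow> (\<And>i. i \<in> I \<Longrightarrow> nice (F i)) \<Longrightarrow> nice (\<lambda>y. \<Sum>i\<in>I. F i y)"
proof (induction I rule: finite_induct)
  case empty thus ?case using nice_const[of 0] by simp
next
  case (insert i I)
  have "nice (\<lambda>y. F i y + (\<Sum>i\<in>I. F i y))" using insert by (intro nice_add) auto
  thus ?case using insert by simp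
qed

lemma nice_pow: "nice F \<Longrightarrow> nice (\<lambda>y. F y ^ k)"
proof (induction k)
  case 0 thus ?case using nice_const[of 1] by simp
next
  case (Suc k) thus ?case using nice_mult[of F "\<lambda>y. F y ^ k"] by simp
qed

definition R :: "(l1 \<Rightarrow> complex) \<Rightarrow> l1 \<Rightarrow> complex" where
  "R F = (\<lambda>y. if y \<in> l1_cball then F y else 0)"

lemma cont_cong: "cont_on_l1 S F \<Longrightarrow> (\<And>y. y \<in> S \<Longrightarrow> G y = F y) \<Longrightarrow> cont_on_l1 S G"
  unfolding cont_on_l1_def by simp

lemma nice_R: assumes "nice F" shows "R F \<in> A_inf"
proof -
  have "holo_on_ball (R F)" unfolding holo_on_ball_def
  proof
    fix a assume a: "a \<in> l1_ball"
    have "hol_at F a" using assms a unfolding nice_def by blast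
    hence "hol_at (R F) a"
    proof (rule hol_local[OF _ a])
      fix y assume "y \<in> l1_ball"
      hence "y \<in> l1_cball" using ball_sub_cball by blast
      thus "R F y = F y" by (simp add: R_def)
    qed
    thus "\<exists>D\<in>l1_dual. \<forall>e>0. \<exists>d>0. \<forall>h\<in>l1_space. l1norm h < d \<longrightarrow> norm (R F (a + h) - R F a - D h) \<le> e * l1norm h"
      unfolding hol_at_def small_def .
  qed
  moreover have "cont_on_l1 l1_cball (R F)"
  proof (rule cont_cong)
    show "cont_on_l1 l1_cball F" using assms unfolding nice_def by blast
  next
    fix y assume "y \<in> l1_cball" thus "R F y = F y" by (simp add: R_def)
  qed
  moreover have "\<exists>C. \<forall>y\<in>l1_ball. norm (R F y) \<le> C"
  proof -
    obtain C where C: "\<forall>y\<in>l1_ball. norm (F y) \<le> C" using assms unfolding nice_def by blast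
    have "\<forall>y\<in>l1_ball. norm (R F y) \<le> C"
    proof
      fix y assume y: "y \<in> l1_ball"
      hence "y \<in> l1_cball" using ball_sub_cball by blast
      thus "norm (R F y) \<le> C" using C y by (simp add: R_def)
    qed
    thus ?thesis by blast
  qed
  moreover have "\<forall>y. y \<notin> l1_cball \<longrightarrow> R F y = 0" by (simp add: R_def)
  ultimately show ?thesis unfolding A_inf_def by blast
qed

lemma Ainf_nice: "f \<in> A_inf \<Longrightarrow> nice f"
  unfolding A_inf_def nice_def holo_on_ball_def hol_at_def small_def by blast

lemma Ainf_R: "f \<in> A_inf \<Longrightarrow> R f = f"
  unfolding A_inf_def R_def by auto

lemma nice_cball_bound: assumes "nice F" shows "\<exists>C. \<forall>y\<in>l1_cball. norm (F y) \<le> C"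
proof -
  obtain C where C: "\<forall>y\<in>l1_ball. norm (F y) \<le> C" using assms unfolding nice_def by blast
  have "\<forall>y\<in>l1_cball. norm (F y) \<le> C + 1"
  proof
    fix y assume y: "y \<in> l1_cball"
    obtain d where d: "d > 0" "\<forall>z\<in>l1_cball. l1norm (z - y) < d \<longrightarrow> norm (F z - F y) < 1"
      using assms y zero_less_one unfolding nice_def cont_on_l1_def by blast
    define t where "t = max (1/2) (1 - d/2)"
    have t: "0 \<le> t" "t < 1" unfolding t_def using d by auto
    have z: "scl (of_real t) y \<in> l1_ball" using scl_cball_ball[OF y t] .
    have "l1norm (scl (of_real t) y - y) = \<bar>1 - t\<bar> * l1norm y" using scl_dist cball_space[OF y] by blast
    also have "\<dots> \<le> \<bar>1 - t\<bar> * 1" using y unfolding l1_cball_def by (intro mult_left_mono) auto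
    also have "\<dots> < d" unfolding t_def using d by auto
    finally have "norm (F (scl (of_real t) y) - F y) < 1" using d z ball_sub_cball by auto
    moreover have "norm (F (scl (of_real t) y)) \<le> C" using C z by auto
    moreover have "norm (F y) \<le> norm (F (scl (of_real t) y)) + norm (F (scl (of_real t) y) - F y)"
      using norm_triangle_ineq[of "F (scl (of_real t) y)" "F y - F (scl (of_real t) y)"]
      by (simp add: norm_minus_commute)
    ultimately show "norm (F y) \<le> C + 1" by linarith
  qed
  thus ?thesis by blast
qed



lemma R_cong: "(\<And>y. y \<in> l1_cball \<Longrightarrow> F y = G y) \<Longrightarrow> R F = R G"
  unfolding R_def by auto

lemma R_add: "R (\<lambda>y. F y + G y) = (\<lambda>y. R F y + R G y)"
  unfolding R_def by auto
lemma R_mult: "R (\<lambda>y. F y * G y) = (\<lambda>y. R F y * R G y)"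
  unfolding R_def by auto
lemma R_cmult: "R (\<lambda>y. c * F y) = (\<lambda>y. c * R F y)"
  unfolding R_def by auto

context
  fixes \<tau> assumes tau: "\<tau> \<in> spectrum_A_inf"
begin

lemma sp_add: "nice F \<Longrightarrow> nice G \<Longrightarrow> \<tau> (R (\<lambda>y. F y + G y)) = \<tau> (R F) + \<tau> (R G)"
  unfolding R_add using tau nice_R unfolding spectrum_A_inf_def by blast

lemma sp_mult: "nice F \<Longrightarrow> nice G \<Longrightarrow> \<tau> (R (\<lambda>y. F y * G y)) = \<tau> (R F) * \<tau> (R G)"
  unfolding R_mult using tau nice_R unfolding spectrum_A_inf_def by blast

lemma sp_cmult: "nice F \<Longrightarrow> \<tau> (R (\<lambda>y. c * F y)) = c * \<tau> (R F)"
  unfolding R_cmult using tau nice_R unfolding spectrum_A_inf_def by blast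

lemma sp_one: "\<tau> (R (\<lambda>y. 1)) = 1"
proof -
  obtain f where f: "f \<in> A_inf" "\<tau> f \<noteq> 0" using tau unfolding spectrum_A_inf_def by blast
  have "nice f" using Ainf_nice[OF f(1)] .
  have "\<tau> (R (\<lambda>y. f y * 1)) = \<tau> (R f) * \<tau> (R (\<lambda>y. 1))"
    using sp_mult[OF \<open>nice f\<close> nice_const] .
  hence "\<tau> f = \<tau> f * \<tau> (R (\<lambda>y. 1))" using Ainf_R[OF f(1)] by simp
  thus ?thesis using f(2) by simp
qed

lemma sp_const: "\<tau> (R (\<lambda>y. c)) = c"
  using sp_cmult[OF nice_const, of c 1] sp_one by simp

lemma sp_sum: "finite I \<Longrightarrow> (\<And>i. i \<in> I \<Longrightarrow> nice (F i)) \<Longrightarrow> \<tau> (R (\<lambda>y. \<Sum>i\<in>I. F i y)) = (\<Sum>i\<in>I. \<tau> (R (F i)))"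
proof (induction I rule: finite_induct)
  case empty thus ?case using sp_const[of 0] by simp
next
  case (insert i I)
  have "\<tau> (R (\<lambda>y. F i y + (\<Sum>i\<in>I. F i y))) = \<tau> (R (F i)) + \<tau> (R (\<lambda>y. \<Sum>i\<in>I. F i y))"
    using insert by (intro sp_add nice_sum) auto
  thus ?case using insert by simp
qed

lemma sp_pow: "nice F \<Longrightarrow> \<tau> (R (\<lambda>y. F y ^ k)) = \<tau> (R F) ^ k"
proof (induction k)
  case 0 thus ?case using sp_const[of 1] by simp
next
  case (Suc k)
  have "\<tau> (R (\<lambda>y. F y * F y ^ k)) = \<tau> (R F) * \<tau> (R (\<lambda>y. F y ^ k))"
    using Suc by (intro sp_mult nice_pow)
  thus ?case using Suc by simp
qed

lemma sp_bound: assumes "nice F" "\<And>y. y \<in> l1_cball \<Longrightarrow> norm (F y) \<le> C"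
  shows "norm (\<tau> (R F)) \<le> C"
proof (rule ccontr)
  assume "\<not> norm (\<tau> (R F)) \<le> C"
  hence lc: "norm (\<tau> (R F)) > C" by simp
  define l where "l = \<tau> (R F)"
  define G where "G = (\<lambda>y. l + (-1) * F y)"
  have nG: "nice G" unfolding G_def by (intro nice_add nice_const nice_cmult assms(1))
  have m: "norm l - C > 0" using lc unfolding l_def by simp
  have low: "norm l - C \<le> norm (G y)" if "y \<in> l1_cball" for y
  proof -
    have "norm l \<le> norm (G y) + norm (F y)" unfolding G_def
      using norm_triangle_ineq[of "l - F y" "F y"] by simp
    thus ?thesis using assms(2)[OF that] by linarith
  qed
  have nH: "nice (\<lambda>y. 1 / G y)" by (rule nice_inv[OF nG m low])
  have "R (\<lambda>y. G y * (1 / G y)) = R (\<lambda>y. 1)"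
  proof (rule R_cong)
    fix y assume "y \<in> l1_cball"
    hence "G y \<noteq> 0" using low m by fastforce
    thus "G y * (1 / G y) = 1" by simp
  qed
  hence "\<tau> (R G) * \<tau> (R (\<lambda>y. 1 / G y)) = 1" using sp_mult[OF nG nH] sp_one by simp
  moreover have "\<tau> (R G) = 0"
  proof -
    have "\<tau> (R G) = \<tau> (R (\<lambda>y. l)) + \<tau> (R (\<lambda>y. (-1) * F y))"
      unfolding G_def by (intro sp_add nice_const nice_cmult assms(1))
    also have "\<dots> = l + (-1) * l" using sp_const[of l] sp_cmult[OF assms(1), of "-1"] unfolding l_def by (simp only:)
    finally show ?thesis by simp
  qed
  ultimately show False by simp
qed

end



definition sg :: "l1 \<Rightarrow> nat \<Rightarrow> complex" where
  "sg x n = (if x n = 0 then 0 else cnj (x n) / of_real (norm (x n)))"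

definition Lx :: "l1 \<Rightarrow> l1 \<Rightarrow> complex" where
  "Lx x y = (\<Sum>n. sg x n * y n)"

lemma sg_norm: "norm (sg x n) \<le> 1"
  unfolding sg_def by (auto simp: norm_divide)

lemma sg_norm1: "x n \<noteq> 0 \<Longrightarrow> norm (sg x n) = 1"
  unfolding sg_def by (auto simp: norm_divide)

lemma sg_mult: "sg x n * x n = of_real (norm (x n))"
proof (cases "x n = 0")
  case False
  have e: "cnj (x n) * x n = (of_real (norm (x n)))^2" using complex_norm_square[of "x n"] by (simp add: mult.commute)
  have nz: "of_real (norm (x n)) \<noteq> (0::complex)" using False by simp
  have "sg x n * x n = (cnj (x n) * x n) / of_real (norm (x n))" using False unfolding sg_def by simp
  also have "\<dots> = of_real (norm (x n))" unfolding e using nz by (simp add: power2_eq_square)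
  finally show ?thesis .
qed (simp add: sg_def)

lemma sgy_norm: "norm (sg x n * y n) \<le> norm (y n)"
  using sg_norm[of x n] by (simp add: norm_mult mult_left_le_one_le)

lemma summable_sgy: assumes "y \<in> l1_space"
  shows "summable (\<lambda>n. norm (sg x n * y n))" "summable (\<lambda>n. sg x n * y n)"
proof -
  show s: "summable (\<lambda>n. norm (sg x n * y n))"
    by (rule summable_comparison_test'[OF l1_summable[OF assms], of 0]) (simp add: sgy_norm)
  show "summable (\<lambda>n. sg x n * y n)" by (rule summable_norm_cancel[OF s])
qed

lemma Lx_bound: assumes "y \<in> l1_space" shows "norm (Lx x y) \<le> l1norm y"
proof -
  have "norm (Lx x y) \<le> (\<Sum>n. norm (sg x n * y n))" unfolding Lx_def
    by (rule summable_norm[OF summable_sgy(1)[OF assms]])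
  also have "\<dots> \<le> (\<Sum>n. norm (y n))"
    by (rule suminf_le) (auto simp: sgy_norm summable_sgy(1)[OF assms] l1_summable[OF assms])
  finally show ?thesis unfolding l1norm_def .
qed

lemma Lx_dual: "Lx x \<in> l1_dual"
proof -
  have add: "Lx x (y + z) = Lx x y + Lx x z" if "y \<in> l1_space" "z \<in> l1_space" for y z
  proof -
    have "Lx x (y + z) = (\<Sum>n. sg x n * y n + sg x n * z n)" unfolding Lx_def by (simp add: algebra_simps)
    also have "\<dots> = Lx x y + Lx x z" unfolding Lx_def
      by (rule suminf_add[symmetric]) (auto intro: summable_sgy that)
    finally show ?thesis .
  qed
  have scl: "Lx x (scl c y) = c * Lx x y" if "y \<in> l1_space" for y c
  proof -
    have "Lx x (scl c y) = (\<Sum>n. c * (sg x n * y n))" unfolding Lx_def scl_def by (simp add: algebra_simps)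
    also have "\<dots> = c * Lx x y" unfolding Lx_def
      by (rule suminf_mult) (rule summable_sgy(2)[OF that])
    finally show ?thesis .
  qed
  show ?thesis unfolding l1_dual_def using add scl Lx_bound by (auto intro!: exI[of _ 1])
qed

lemma Lx_self: assumes "x \<in> l1_space" shows "Lx x x = of_real (l1norm x)"
proof -
  have "Lx x x = (\<Sum>n. of_real (norm (x n)))" unfolding Lx_def by (simp add: sg_mult)
  also have "\<dots> = of_real (\<Sum>n. norm (x n))" by (rule suminf_of_real[symmetric, OF l1_summable[OF assms]])
  finally show ?thesis unfolding l1norm_def .
qed

lemma Lx_term: assumes "y \<in> l1_cball"
  shows "norm (y n) - Re (sg x n * y n) \<le> 1 - Re (Lx x y)"
proof -
  have sp: "y \<in> l1_space" using assms cball_space by blast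
  have sRe: "summable (\<lambda>n. Re (sg x n * y n))"
    apply (rule summable_comparison_test'[OF summable_sgy(1)[OF sp], of 0])
    apply (simp only: real_norm_def)
    by (rule abs_Re_le_cmod)
  have ReL: "Re (Lx x y) = (\<Sum>n. Re (sg x n * y n))" unfolding Lx_def
    by (rule Re_suminf[OF summable_sgy(2)[OF sp]])
  have nonneg: "0 \<le> norm (y k) - Re (sg x k * y k)" for k
    using complex_Re_le_cmod[of "sg x k * y k"] sgy_norm[of x k y] by linarith
  have sd: "summable (\<lambda>k. norm (y k) - Re (sg x k * y k))"
    by (rule summable_diff[OF l1_summable[OF sp] sRe])
  have "(\<Sum>k\<in>{n}. norm (y k) - Re (sg x k * y k)) \<le> (\<Sum>k. norm (y k) - Re (sg x k * y k))"
    by (rule sum_le_suminf[OF sd]) (use nonneg in blast)+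
  also have "\<dots> = l1norm y - Re (Lx x y)"
    unfolding ReL l1norm_def by (rule suminf_diff[OF l1_summable[OF sp] sRe, symmetric])
  also have "\<dots> \<le> 1 - Re (Lx x y)" using assms unfolding l1_cball_def by auto
  finally show ?thesis by simp
qed

lemma Re_Lx_le: assumes "y \<in> l1_cball" shows "Re (Lx x y) \<le> 1"
proof -
  have "Re (Lx x y) \<le> norm (Lx x y)" by (rule complex_Re_le_cmod)
  also have "\<dots> \<le> l1norm y" by (rule Lx_bound[OF cball_space[OF assms]])
  also have "\<dots> \<le> 1" using assms unfolding l1_cball_def by auto
  finally show ?thesis .
qed

lemma coord_dual: "(\<lambda>y. c * y n) \<in> l1_dual"
proof -
  have "\<forall>y\<in>l1_space. norm (c * y n) \<le> norm c * l1norm y"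
    using l1norm_coord by (auto simp: norm_mult intro: mult_left_mono)
  hence "\<exists>C. \<forall>y\<in>l1_space. norm (c * y n) \<le> C * l1norm y" by blast
  thus ?thesis unfolding l1_dual_def scl_def by (auto simp: algebra_simps)
qed



lemma suminf_out:
  fixes f :: "nat \<Rightarrow> real"
  assumes "summable f" "finite I"
  shows "(\<Sum>n. if n \<in> I then 0 else f n) = suminf f - (\<Sum>n\<in>I. f n)"
proof -
  have s1: "summable (\<lambda>n. if n \<in> I then f n else 0)" by (rule summable_finite[OF assms(2)]) auto
  have e1: "(\<Sum>n. if n \<in> I then f n else 0) = (\<Sum>n\<in>I. f n)"
    by (subst suminf_finite[OF assms(2)]) auto
  have "suminf f = (\<Sum>n. f n - (if n \<in> I then f n else 0)) + (\<Sum>n. if n \<in> I then f n else 0)"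
  proof -
    have "(\<Sum>n. f n - (if n \<in> I then f n else 0)) = suminf f - (\<Sum>n. if n \<in> I then f n else 0)"
      by (rule suminf_diff[OF assms(1) s1, symmetric])
    thus ?thesis by simp
  qed
  moreover have "(\<lambda>n. f n - (if n \<in> I then f n else 0)) = (\<lambda>n. if n \<in> I then 0 else f n)" by auto
  ultimately show ?thesis using e1 by simp
qed

lemma summable_out:
  fixes f :: "nat \<Rightarrow> real"
  assumes "summable f" "finite I"
  shows "summable (\<lambda>n. if n \<in> I then 0 else f n)"
proof -
  have s1: "summable (\<lambda>n. if n \<in> I then f n else 0)" by (rule summable_finite[OF assms(2)]) auto
  have "summable (\<lambda>n. f n - (if n \<in> I then f n else 0))" by (rule summable_diff[OF assms(1) s1])
  moreover have "(\<lambda>n. f n - (if n \<in> I then f n else 0)) = (\<lambda>n. if n \<in> I then 0 else f n)" by auto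
  ultimately show ?thesis by simp
qed

lemma gap_core:
  assumes y: "y \<in> l1_cball" and x: "x \<in> l1_sphere" and I: "finite I" "I \<subseteq> {..<N}" "\<forall>n\<in>I. x n \<noteq> 0"
    and r: "r \<ge> 0"
    and near: "\<forall>n\<in>I. norm (sg x n * y n - of_real (norm (x n))) \<le> 3 * r"
    and re: "\<forall>n\<in>I. Re (sg x n * y n) \<ge> norm (x n) - r"
  shows "l1norm (y - x) \<le> 4 * r * real N + 2 * (1 - (\<Sum>n\<in>I. norm (x n)))"
proof -
  have ys: "y \<in> l1_space" using y cball_space by blast
  have xs: "x \<in> l1_space" and x1: "l1norm x = 1" using x unfolding l1_sphere_def by auto
  have y1: "l1norm y \<le> 1" using y unfolding l1_cball_def by auto
  define W where "W = (\<Sum>n\<in>I. norm (x n))"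
  have cardI: "real (card I) \<le> real N" using card_mono[OF _ I(2)] by simp
  define b1 where "b1 = (\<lambda>n. if n \<in> I then norm (y n - x n) else 0)"
  define b2 where "b2 = (\<lambda>n. if n \<in> I then 0 else norm (y n))"
  define b3 where "b3 = (\<lambda>n. if n \<in> I then 0 else norm (x n))"
  have sb1: "summable b1" unfolding b1_def by (rule summable_finite[OF I(1)]) auto
  have sb2: "summable b2" unfolding b2_def by (rule summable_out[OF l1_summable[OF ys] I(1)])
  have sb3: "summable b3" unfolding b3_def by (rule summable_out[OF l1_summable[OF xs] I(1)])
  have sd: "summable (\<lambda>n. norm ((y - x) n))" using l1_summable[OF l1_diff[OF ys xs]] .
  have pt: "norm ((y - x) n) \<le> b1 n + b2 n + b3 n" for n
    unfolding b1_def b2_def b3_def by (auto simp: norm_triangle_ineq4)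
  have "l1norm (y - x) \<le> (\<Sum>n. b1 n + b2 n + b3 n)" unfolding l1norm_def
    by (rule suminf_le[OF pt sd summable_add[OF summable_add[OF sb1 sb2] sb3]])
  also have "\<dots> = suminf b1 + suminf b2 + suminf b3"
    using sb1 sb2 sb3 by (simp add: suminf_add summable_add)
  also have "suminf b1 = (\<Sum>n\<in>I. norm (y n - x n))" unfolding b1_def
    by (subst suminf_finite[OF I(1)]) auto
  also have "suminf b2 = l1norm y - (\<Sum>n\<in>I. norm (y n))" unfolding b2_def l1norm_def
    by (rule suminf_out[OF l1_summable[OF ys] I(1)])
  also have "suminf b3 = 1 - W" unfolding b3_def W_def using x1 unfolding l1norm_def
    by (simp add: suminf_out[OF l1_summable[OF xs] I(1)])
  also have "(\<Sum>n\<in>I. norm (y n - x n)) \<le> (\<Sum>n\<in>I. 3 * r)"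
  proof (rule sum_mono)
    fix n assume n: "n \<in> I"
    have "norm (sg x n) = 1" using sg_norm1 I(3) n by blast
    hence "norm (y n - x n) = norm (sg x n * (y n - x n))" by (simp add: norm_mult)
    also have "sg x n * (y n - x n) = sg x n * y n - of_real (norm (x n))" using sg_mult[of x n] by (simp add: algebra_simps)
    finally show "norm (y n - x n) \<le> 3 * r" using near n by simp
  qed
  also have "(\<Sum>n\<in>I. 3 * r) = 3 * r * real (card I)" by simp
  also have "l1norm y - (\<Sum>n\<in>I. norm (y n)) \<le> 1 - (W - r * real (card I))"
  proof -
    have "(\<Sum>n\<in>I. norm (x n) - r) \<le> (\<Sum>n\<in>I. norm (y n))"
    proof (rule sum_mono)
      fix n assume n: "n \<in> I"
      have "norm (x n) - r \<le> Re (sg x n * y n)" using re n by blast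
      also have "\<dots> \<le> norm (sg x n * y n)" by (rule complex_Re_le_cmod)
      also have "\<dots> \<le> norm (y n)" by (rule sgy_norm)
      finally show "norm (x n) - r \<le> norm (y n)" .
    qed
    hence "W - r * real (card I) \<le> (\<Sum>n\<in>I. norm (y n))" unfolding W_def by (simp add: sum_subtractf mult.commute)
    thus ?thesis using y1 by linarith
  qed
  finally have "l1norm (y - x) \<le> 3 * r * real (card I) + (1 - (W - r * real (card I))) + (1 - W)" by (simp add: fun_diff_def)
  also have "\<dots> = 4 * r * real (card I) + 2 * (1 - W)" by (simp add: algebra_simps)
  also have "\<dots> \<le> 4 * r * real N + 2 * (1 - W)" using cardI r by (simp add: mult_left_mono)
  finally show ?thesis unfolding W_def .
qed



lemma re_quad1:
  fixes u :: complex and \<rho> :: real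
  assumes "norm u \<le> 1" "norm u - Re u \<le> \<rho>"
  shows "(Im u)^2 \<le> 2 * \<rho>"
proof -
  have sq: "(norm u)^2 = (Re u)^2 + (Im u)^2" by (rule cmod_power2)
  have a: "0 \<le> norm u - Re u" using complex_Re_le_cmod[of u] by linarith
  have b: "norm u + Re u \<le> 2" using complex_Re_le_cmod[of u] assms(1) by linarith
  have "(Im u)^2 = (norm u - Re u) * (norm u + Re u)" using sq by (simp add: power2_eq_square algebra_simps)
  also have "\<dots> \<le> (norm u - Re u) * 2" using a b by (intro mult_left_mono) auto
  also have "\<dots> \<le> 2 * \<rho>" using assms(2) by simp
  finally show ?thesis .
qed

lemma re_quad2:
  fixes u :: complex and w :: real
  shows "Re ((u + of_real (-w)) * (u + of_real (-w))) = (Re u - w)^2 - (Im u)^2"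
  by (simp add: power2_eq_square algebra_simps)

lemma sq_less_abs: fixes a r :: real assumes "a^2 < r^2" "r \<ge> 0" shows "\<bar>a\<bar> < r"
  using power_less_imp_less_base[of "\<bar>a\<bar>" 2 r] assms by simp

lemma aux_lin: "1 - d / 4 < (S::real) \<Longrightarrow> 2 * (1 - S) < d / 2" by (simp add: field_simps)

lemma fiber_dual: "\<tau> \<in> fiber x \<Longrightarrow> L \<in> l1_dual \<Longrightarrow> \<tau> (R L) = L x"
  unfolding fiber_def R_def by auto

lemma fiber_sp: "\<tau> \<in> fiber x \<Longrightarrow> \<tau> \<in> spectrum_A_inf"
  unfolding fiber_def by auto

lemma nice_coord: "nice (\<lambda>y. c * y n)"
  by (rule nice_dual[OF coord_dual])

lemma peak:
  assumes x: "x \<in> l1_sphere" and dpos: "\<delta> > 0"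
  shows "\<exists>Q c. nice Q \<and> c > 0 \<and> (\<forall>\<tau>\<in>fiber x. \<tau> (R Q) = 0) \<and> (\<forall>y\<in>l1_cball. Re (Q y) \<ge> 0)
            \<and> (\<forall>y\<in>l1_cball. l1norm (y - x) \<ge> \<delta> \<longrightarrow> Re (Q y) \<ge> c)"
proof -
  have xs: "x \<in> l1_space" and x1: "l1norm x = 1" using x unfolding l1_sphere_def by auto
  have "(\<lambda>N. \<Sum>n<N. norm (x n)) \<longlonglongrightarrow> 1"
    using summable_LIMSEQ[OF l1_summable[OF xs]] x1 unfolding l1norm_def by simp
  hence "eventually (\<lambda>N. 1 - \<delta>/4 < (\<Sum>n<N. norm (x n))) sequentially"
    using dpos by (intro order_tendstoD(1)) auto
  then obtain N where N: "1 - \<delta>/4 < (\<Sum>n<N. norm (x n))" unfolding eventually_sequentially by auto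
  define I where "I = {n. n < N \<and> x n \<noteq> 0}"
  have fI: "finite I" and IN: "I \<subseteq> {..<N}" and Inz: "\<forall>n\<in>I. x n \<noteq> 0" unfolding I_def by auto
  define w where "w = (\<lambda>n. norm (x n))"
  have wpos: "w n > 0" if "n \<in> I" for n using Inz that unfolding w_def by auto
  have wle: "w n \<le> 1" for n using l1norm_coord[OF xs, of n] x1 unfolding w_def by simp
  have WI: "(\<Sum>n\<in>I. w n) = (\<Sum>n<N. norm (x n))" unfolding w_def
    by (rule sum.mono_neutral_cong_left) (auto simp: I_def)
  define M where "M = 1 + 2 * (\<Sum>n\<in>I. 1 / w n)"
  define v where "v = (\<lambda>n y. sg x n * y n + of_real (- w n))"
  define F1 where "F1 = (\<lambda>y. 1 + (-1) * Lx x y)"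
  define S where "S = (\<lambda>y. \<Sum>n\<in>I. of_real (1 / w n) * (v n y * v n y))"
  define Q where "Q = (\<lambda>y. of_real M * F1 y + S y)"
  have nv: "nice (v n)" for n unfolding v_def by (intro nice_add nice_coord nice_const)
  have nF1: "nice F1" unfolding F1_def by (intro nice_add nice_const nice_cmult nice_dual[OF Lx_dual])
  have nS: "nice S" unfolding S_def by (intro nice_sum fI nice_cmult nice_mult nv)
  have nQ: "nice Q" unfolding Q_def by (intro nice_add nice_cmult nF1 nS)
  have tauQ: "\<tau> (R Q) = 0" if t: "\<tau> \<in> fiber x" for \<tau>
  proof -
    have sp: "\<tau> \<in> spectrum_A_inf" using fiber_sp[OF t] .
    have tL: "\<tau> (R (Lx x)) = 1" using fiber_dual[OF t Lx_dual] Lx_self[OF xs] x1 by simp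
    have tF1: "\<tau> (R F1) = 0"
    proof -
      have "\<tau> (R F1) = \<tau> (R (\<lambda>y. 1)) + \<tau> (R (\<lambda>y. (-1) * Lx x y))"
        unfolding F1_def by (rule sp_add[OF sp nice_const nice_cmult[OF nice_dual[OF Lx_dual]]])
      also have "\<dots> = 1 + (-1) * 1"
        using sp_const[OF sp, of 1] sp_cmult[OF sp nice_dual[OF Lx_dual], of "-1"] tL by (simp only:)
      finally show ?thesis by simp
    qed
    have tv: "\<tau> (R (v n)) = 0" for n
    proof -
      have "\<tau> (R (v n)) = \<tau> (R (\<lambda>y. sg x n * y n)) + \<tau> (R (\<lambda>y. of_real (- w n)))"
        unfolding v_def by (rule sp_add[OF sp nice_coord nice_const])
      also have "\<dots> = sg x n * x n + of_real (- w n)"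
        using fiber_dual[OF t coord_dual] sp_const[OF sp] by simp
      finally show ?thesis using sg_mult[of x n] unfolding w_def by simp
    qed
    have tS: "\<tau> (R S) = 0"
    proof -
      have "\<tau> (R S) = (\<Sum>n\<in>I. \<tau> (R (\<lambda>y. of_real (1 / w n) * (v n y * v n y))))"
        unfolding S_def by (rule sp_sum[OF sp fI]) (intro nice_cmult nice_mult nv)
      also have "\<dots> = (\<Sum>n\<in>I. of_real (1 / w n) * (\<tau> (R (v n)) * \<tau> (R (v n))))"
      proof (rule sum.cong[OF refl])
        fix n
        have "\<tau> (R (\<lambda>y. of_real (1 / w n) * (v n y * v n y))) = of_real (1 / w n) * \<tau> (R (\<lambda>y. v n y * v n y))"
          by (rule sp_cmult[OF sp nice_mult[OF nv nv]])
        also have "\<tau> (R (\<lambda>y. v n y * v n y)) = \<tau> (R (v n)) * \<tau> (R (v n))"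
          using sp_mult[OF sp nv nv] by simp
        finally show "\<tau> (R (\<lambda>y. of_real (1 / w n) * (v n y * v n y))) = of_real (1 / w n) * (\<tau> (R (v n)) * \<tau> (R (v n)))" .
      qed
      also have "\<dots> = 0" using tv by simp
      finally show ?thesis .
    qed
    have "\<tau> (R Q) = \<tau> (R (\<lambda>y. of_real M * F1 y)) + \<tau> (R S)"
      unfolding Q_def by (rule sp_add[OF sp nice_cmult[OF nF1] nS])
    also have "\<dots> = of_real M * \<tau> (R F1) + \<tau> (R S)" using sp_cmult[OF sp nF1] by simp
    finally show ?thesis using tF1 tS by simp
  qed
  have lowb: "Re (Q y) \<ge> (1 - Re (Lx x y)) + (\<Sum>n\<in>I. (Re (sg x n * y n) - w n)^2)
             \<and> 0 \<le> 1 - Re (Lx x y) \<and> (\<forall>n\<in>I. (Im (sg x n * y n))^2 \<le> 2 * (1 - Re (Lx x y)))"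
    if y: "y \<in> l1_cball" for y
  proof -
    define \<rho> where "\<rho> = 1 - Re (Lx x y)"
    have \<rho>0: "0 \<le> \<rho>" using Re_Lx_le[OF y] unfolding \<rho>_def by simp
    have ys: "y \<in> l1_space" using y cball_space by blast
    have y1: "l1norm y \<le> 1" using y unfolding l1_cball_def by auto
    have im: "(Im (sg x n * y n))^2 \<le> 2 * \<rho>" for n
    proof (rule re_quad1)
      show "norm (sg x n * y n) \<le> 1" using sgy_norm[of x n y] l1norm_coord[OF ys, of n] y1 by linarith
      show "norm (sg x n * y n) - Re (sg x n * y n) \<le> \<rho>"
        using sgy_norm[of x n y] Lx_term[OF y, of n x] unfolding \<rho>_def by linarith
    qed
    have ReQ: "Re (Q y) = M * \<rho> + (\<Sum>n\<in>I. (1 / w n) * ((Re (sg x n * y n) - w n)^2 - (Im (sg x n * y n))^2))"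
    proof -
      have t: "Re (of_real (1 / w n) * (v n y * v n y)) = (1 / w n) * ((Re (sg x n * y n) - w n)^2 - (Im (sg x n * y n))^2)" for n
      proof -
        have "Re (of_real (1 / w n) * (v n y * v n y)) = (1 / w n) * Re (v n y * v n y)" by simp
        also have "Re (v n y * v n y) = (Re (sg x n * y n) - w n)^2 - (Im (sg x n * y n))^2"
          unfolding v_def by (rule re_quad2)
        finally show ?thesis .
      qed
      have "Re (S y) = (\<Sum>n\<in>I. Re (of_real (1 / w n) * (v n y * v n y)))" unfolding S_def by (rule Re_sum)
      also have "\<dots> = (\<Sum>n\<in>I. (1 / w n) * ((Re (sg x n * y n) - w n)^2 - (Im (sg x n * y n))^2))"
        by (rule sum.cong[OF refl t])
      finally have rs: "Re (S y) = (\<Sum>n\<in>I. (1 / w n) * ((Re (sg x n * y n) - w n)^2 - (Im (sg x n * y n))^2))" .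
      have "Re (of_real M * F1 y) = M * \<rho>" unfolding F1_def \<rho>_def by simp
      thus ?thesis unfolding Q_def using rs by simp
    qed
    have "(\<Sum>n\<in>I. (1 / w n) * ((Re (sg x n * y n) - w n)^2 - (Im (sg x n * y n))^2))
        \<ge> (\<Sum>n\<in>I. (1 / w n) * (Re (sg x n * y n) - w n)^2 - (1 / w n) * (2 * \<rho>))"
    proof (rule sum_mono)
      fix n assume n: "n \<in> I"
      have "(1 / w n) * (Im (sg x n * y n))^2 \<le> (1 / w n) * (2 * \<rho>)"
        using im[of n] wpos[OF n] by (intro mult_left_mono) auto
      thus "(1 / w n) * (Re (sg x n * y n) - w n)^2 - (1 / w n) * (2 * \<rho>)
          \<le> (1 / w n) * ((Re (sg x n * y n) - w n)^2 - (Im (sg x n * y n))^2)"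
        by (simp add: right_diff_distrib)
    qed
    also have "(\<Sum>n\<in>I. (1 / w n) * (Re (sg x n * y n) - w n)^2 - (1 / w n) * (2 * \<rho>))
        = (\<Sum>n\<in>I. (1 / w n) * (Re (sg x n * y n) - w n)^2) - 2 * \<rho> * (\<Sum>n\<in>I. 1 / w n)"
      by (simp add: sum_subtractf sum_distrib_left mult.commute)
    finally have "Re (Q y) \<ge> M * \<rho> + (\<Sum>n\<in>I. (1 / w n) * (Re (sg x n * y n) - w n)^2) - 2 * \<rho> * (\<Sum>n\<in>I. 1 / w n)"
      unfolding ReQ by linarith
    also have "M * \<rho> - 2 * \<rho> * (\<Sum>n\<in>I. 1 / w n) = \<rho>" unfolding M_def by (simp add: algebra_simps)
    hence "M * \<rho> + (\<Sum>n\<in>I. (1 / w n) * (Re (sg x n * y n) - w n)^2) - 2 * \<rho> * (\<Sum>n\<in>I. 1 / w n)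
         = \<rho> + (\<Sum>n\<in>I. (1 / w n) * (Re (sg x n * y n) - w n)^2)" by simp
    also have "(\<Sum>n\<in>I. (1 / w n) * (Re (sg x n * y n) - w n)^2) \<ge> (\<Sum>n\<in>I. (Re (sg x n * y n) - w n)^2)"
    proof (rule sum_mono)
      fix n assume n: "n \<in> I"
      have "1 \<le> 1 / w n" using wpos[OF n] wle[of n] by simp
      thus "(Re (sg x n * y n) - w n)^2 \<le> (1 / w n) * (Re (sg x n * y n) - w n)^2"
        using mult_right_mono[of 1 "1 / w n" "(Re (sg x n * y n) - w n)^2"] by simp
    qed
    ultimately show ?thesis using \<rho>0 im unfolding \<rho>_def by simp
  qed
  define r where "r = \<delta> / (8 * (real N + 1))"
  have rpos: "r > 0" unfolding r_def using dpos by simp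
  have nonneg: "\<forall>y\<in>l1_cball. Re (Q y) \<ge> 0"
  proof
    fix y assume y: "y \<in> l1_cball"
    have "0 \<le> (\<Sum>n\<in>I. (Re (sg x n * y n) - w n)^2)" by (intro sum_nonneg) auto
    thus "Re (Q y) \<ge> 0" using lowb[OF y] by linarith
  qed
  have gap: "\<forall>y\<in>l1_cball. l1norm (y - x) \<ge> \<delta> \<longrightarrow> Re (Q y) \<ge> r^2"
  proof (intro ballI impI)
    fix y assume y: "y \<in> l1_cball" and far: "l1norm (y - x) \<ge> \<delta>"
    show "Re (Q y) \<ge> r^2"
    proof (rule ccontr)
      assume "\<not> Re (Q y) \<ge> r^2"
      hence lt: "Re (Q y) < r^2" by simp
      note lb = lowb[OF y]
      have T0: "0 \<le> (\<Sum>n\<in>I. (Re (sg x n * y n) - w n)^2)" by (intro sum_nonneg) auto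
      have rho: "1 - Re (Lx x y) < r^2" using lb T0 lt by linarith
      have ren: "\<bar>Re (sg x n * y n) - w n\<bar> < r" if n: "n \<in> I" for n
      proof -
        have "(Re (sg x n * y n) - w n)^2 \<le> (\<Sum>n\<in>I. (Re (sg x n * y n) - w n)^2)"
          by (rule member_le_sum[OF n]) (auto simp: fI)
        hence "(Re (sg x n * y n) - w n)^2 < r^2" using lb lt by linarith
        thus ?thesis using sq_less_abs rpos by simp
      qed
      have imn: "\<bar>Im (sg x n * y n)\<bar> < 2 * r" if n: "n \<in> I" for n
      proof -
        have "(Im (sg x n * y n))^2 \<le> 2 * (1 - Re (Lx x y))" using lb n by blast
        also have "\<dots> < 2 * r^2" using rho by simp
        also have "\<dots> \<le> (2 * r)^2" by (simp add: power2_eq_square)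
        finally have "(Im (sg x n * y n))^2 < (2 * r)^2" .
        thus ?thesis using sq_less_abs rpos by simp
      qed
      have near: "\<forall>n\<in>I. norm (sg x n * y n - of_real (norm (x n))) \<le> 3 * r"
      proof
        fix n assume n: "n \<in> I"
        have "norm (sg x n * y n - of_real (w n)) \<le> \<bar>Re (sg x n * y n - of_real (w n))\<bar> + \<bar>Im (sg x n * y n - of_real (w n))\<bar>"
          by (rule cmod_le)
        also have "\<dots> \<le> 3 * r" using ren[OF n] imn[OF n] by simp
        finally show "norm (sg x n * y n - of_real (norm (x n))) \<le> 3 * r" unfolding w_def .
      qed
      have re: "\<forall>n\<in>I. Re (sg x n * y n) \<ge> norm (x n) - r" using ren unfolding w_def by force
      have "l1norm (y - x) \<le> 4 * r * real N + 2 * (1 - (\<Sum>n\<in>I. norm (x n)))"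
        by (rule gap_core[OF y x fI IN Inz _ near re]) (use rpos in simp)
      also have "(\<Sum>n\<in>I. norm (x n)) = (\<Sum>n<N. norm (x n))" using WI unfolding w_def .
      finally have fin: "l1norm (y - x) \<le> 4 * r * real N + 2 * (1 - (\<Sum>n<N. norm (x n)))" .
      have h2: "2 * (1 - (\<Sum>n<N. norm (x n))) < \<delta> / 2" using aux_lin[OF N] .
      have "l1norm (y - x) < 4 * r * real N + \<delta> / 2" using fin h2 by linarith
      also have "4 * r * real N \<le> \<delta> / 2"
      proof -
        have "4 * r * real N = \<delta> / 2 * (real N / (real N + 1))" unfolding r_def by (simp add: field_simps)
        also have "\<dots> \<le> \<delta> / 2 * 1" using dpos by (intro mult_left_mono) auto
        finally show ?thesis by simp
      qed
      finally show False using far by simp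
    qed
  qed
  show ?thesis using nQ tauQ nonneg gap rpos by (intro exI[of _ Q] exI[of _ "r^2"]) auto
qed



lemma fiber_eval:
  assumes x: "x \<in> l1_sphere" and t: "\<tau> \<in> fiber x" and f: "f \<in> A_inf"
  shows "\<tau> f = f x"
proof -
  have sp: "\<tau> \<in> spectrum_A_inf" using fiber_sp[OF t] .
  have nf: "nice f" using Ainf_nice[OF f] .
  have xc: "x \<in> l1_cball" using x sphere_sub_cball by blast
  define g where "g = (\<lambda>y. f y + (- f x))"
  have ng: "nice g" unfolding g_def by (intro nice_add nf nice_const)
  have tg: "\<tau> (R g) = \<tau> f - f x"
  proof -
    have "\<tau> (R g) = \<tau> (R f) + \<tau> (R (\<lambda>y. - f x))" unfolding g_def by (rule sp_add[OF sp nf nice_const])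
    thus ?thesis using Ainf_R[OF f] sp_const[OF sp] by simp
  qed
  have small_all: "norm (\<tau> (R g)) \<le> e" if e: "e > 0" for e
  proof -
    obtain d where d: "d > 0" "\<forall>y\<in>l1_cball. l1norm (y - x) < d \<longrightarrow> norm (f y - f x) < e"
      using nf xc e unfolding nice_def cont_on_l1_def by blast
    obtain Q c where Q: "nice Q" "c > 0" "\<forall>\<tau>\<in>fiber x. \<tau> (R Q) = 0" "\<forall>y\<in>l1_cball. Re (Q y) \<ge> 0"
      "\<forall>y\<in>l1_cball. l1norm (y - x) \<ge> d \<longrightarrow> Re (Q y) \<ge> c"
      using peak[OF x d(1)] by blast
    obtain C where C: "\<forall>y\<in>l1_cball. norm (g y) \<le> C" using nice_cball_bound[OF ng] by blast
    have C0: "C \<ge> 0" using C xc by (auto intro: order_trans[OF norm_ge_zero])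
    define q where "q = 1 / (1 + c)"
    have q: "0 < q" "q < 1" unfolding q_def using Q(2) by auto
    obtain k where k: "q ^ k < e / (C + 1)" using real_arch_pow_inv[of "e / (C + 1)" q] e C0 q by auto
    define P where "P = (\<lambda>y. 1 + Q y)"
    have nP: "nice P" unfolding P_def by (intro nice_add nice_const Q(1))
    have lowP: "1 \<le> norm (P y)" if "y \<in> l1_cball" for y
    proof -
      have "1 \<le> Re (P y)" using Q(4) that unfolding P_def by simp
      also have "\<dots> \<le> norm (P y)" by (rule complex_Re_le_cmod)
      finally show ?thesis .
    qed
    define h where "h = (\<lambda>y. 1 / P y)"
    have nh: "nice h" unfolding h_def by (rule nice_inv[OF nP zero_less_one lowP])
    have th: "\<tau> (R h) = 1"
    proof -
      have "R (\<lambda>y. P y * h y) = R (\<lambda>y. 1)"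
      proof (rule R_cong)
        fix y assume "y \<in> l1_cball"
        hence "P y \<noteq> 0" using lowP by fastforce
        thus "P y * h y = 1" unfolding h_def by simp
      qed
      hence "\<tau> (R P) * \<tau> (R h) = 1" using sp_mult[OF sp nP nh] sp_one[OF sp] by simp
      moreover have "\<tau> (R P) = 1"
      proof -
        have "\<tau> (R P) = \<tau> (R (\<lambda>y. 1)) + \<tau> (R Q)" unfolding P_def by (rule sp_add[OF sp nice_const Q(1)])
        thus ?thesis using sp_one[OF sp] Q(3) t by simp
      qed
      ultimately show ?thesis by simp
    qed
    have hle1: "norm (h y) \<le> 1" if "y \<in> l1_cball" for y
    proof -
      have "1 / norm (P y) \<le> 1 / 1" using lowP[OF that] by (intro divide_left_mono) auto
      thus ?thesis unfolding h_def by (simp add: norm_divide)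
    qed
    have hleq: "norm (h y) \<le> q" if "y \<in> l1_cball" "l1norm (y - x) \<ge> d" for y
    proof -
      have "1 + c \<le> Re (P y)" using Q(5) that unfolding P_def by simp
      also have "\<dots> \<le> norm (P y)" by (rule complex_Re_le_cmod)
      finally have "1 + c \<le> norm (P y)" .
      moreover have "0 < norm (P y) * (1 + c)"
        using \<open>1 + c \<le> norm (P y)\<close> Q(2) by (intro mult_pos_pos) auto
      ultimately have "1 / norm (P y) \<le> 1 / (1 + c)" using Q(2) by (intro divide_left_mono) auto
      thus ?thesis unfolding h_def q_def by (simp add: norm_divide)
    qed
    define G where "G = (\<lambda>y. g y * h y ^ k)"
    have nG: "nice G" unfolding G_def by (intro nice_mult ng nice_pow nh)
    have tG: "\<tau> (R G) = \<tau> (R g)"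
    proof -
      have "\<tau> (R G) = \<tau> (R g) * \<tau> (R (\<lambda>y. h y ^ k))" unfolding G_def by (rule sp_mult[OF sp ng nice_pow[OF nh]])
      also have "\<tau> (R (\<lambda>y. h y ^ k)) = 1" using sp_pow[OF sp nh, of k] th by simp
      finally show ?thesis by simp
    qed
    have Gb: "norm (G y) \<le> e" if y: "y \<in> l1_cball" for y
    proof (cases "l1norm (y - x) < d")
      case True
      have "norm (g y) < e" using d(2) y True unfolding g_def by simp
      moreover have "norm (h y) ^ k \<le> 1" using hle1[OF y] by (simp add: power_le_one)
      ultimately have "norm (g y) * norm (h y) ^ k \<le> e * 1"
        using e by (intro mult_mono) auto
      thus ?thesis unfolding G_def by (simp add: norm_mult norm_power)
    next
      case False
      have "norm (h y) ^ k \<le> q ^ k" using hleq[OF y] False by (intro power_mono) auto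
      hence "norm (g y) * norm (h y) ^ k \<le> C * q ^ k"
        using C y C0 by (intro mult_mono) auto
      also have "\<dots> \<le> (C + 1) * (e / (C + 1))"
        using k C0 q by (intro mult_mono) auto
      also have "\<dots> = e" using C0 by simp
      finally show ?thesis unfolding G_def by (simp add: norm_mult norm_power)
    qed
    have "norm (\<tau> (R G)) \<le> e" by (rule sp_bound[OF sp nG Gb])
    thus ?thesis using tG by simp
  qed
  have "norm (\<tau> (R g)) = 0"
  proof (rule ccontr)
    assume "norm (\<tau> (R g)) \<noteq> 0"
    hence "norm (\<tau> (R g)) > 0" by simp
    hence "norm (\<tau> (R g)) \<le> norm (\<tau> (R g)) / 2" using small_all[of "norm (\<tau> (R g)) / 2"] by simp
    thus False using \<open>norm (\<tau> (R g)) > 0\<close> by simp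
  qed
  thus ?thesis using tg by simp
qed



lemma kadec:
  assumes x: "x \<in> l1_sphere" and coord: "\<forall>n. ((\<lambda>y. y n) \<longlongrightarrow> x n) F"
    and ev: "eventually (\<lambda>y. y \<in> l1_ball) F" and e: "e > 0"
  shows "eventually (\<lambda>y. l1norm (y - x) < e) F"
proof -
  have xs: "x \<in> l1_space" and x1: "l1norm x = 1" using x unfolding l1_sphere_def by auto
  have "(\<lambda>N. \<Sum>n<N. norm (x n)) \<longlonglongrightarrow> 1"
    using summable_LIMSEQ[OF l1_summable[OF xs]] x1 unfolding l1norm_def by simp
  hence "eventually (\<lambda>N. 1 - e/8 < (\<Sum>n<N. norm (x n))) sequentially"
    using e by (intro order_tendstoD(1)) auto
  then obtain N where N: "1 - e/8 < (\<Sum>n<N. norm (x n))" unfolding eventually_sequentially by auto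
  define I where "I = {n. n < N \<and> x n \<noteq> 0}"
  have fI: "finite I" and IN: "I \<subseteq> {..<N}" and Inz: "\<forall>n\<in>I. x n \<noteq> 0" unfolding I_def by auto
  have WI: "(\<Sum>n\<in>I. norm (x n)) = (\<Sum>n<N. norm (x n))"
    by (rule sum.mono_neutral_cong_left) (auto simp: I_def)
  define r where "r = e / (8 * (real N + 1))"
  have rpos: "r > 0" unfolding r_def using e by simp
  have "\<forall>n\<in>I. eventually (\<lambda>y. dist (y n) (x n) < r) F"
    using coord rpos unfolding tendsto_iff by blast
  hence "eventually (\<lambda>y. \<forall>n\<in>I. dist (y n) (x n) < r) F" by (rule eventually_ball_finite[OF fI])
  hence "eventually (\<lambda>y. (\<forall>n\<in>I. dist (y n) (x n) < r) \<and> y \<in> l1_ball) F" using ev by (rule eventually_conj)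
  thus ?thesis
  proof (rule eventually_mono)
    fix y assume a: "(\<forall>n\<in>I. dist (y n) (x n) < r) \<and> y \<in> l1_ball"
    have y: "y \<in> l1_cball" using a ball_sub_cball by blast
    have sdiff: "norm (sg x n * y n - of_real (norm (x n))) \<le> r" if n: "n \<in> I" for n
    proof -
      have "sg x n * y n - of_real (norm (x n)) = sg x n * (y n - x n)" using sg_mult[of x n] by (simp add: algebra_simps)
      hence "norm (sg x n * y n - of_real (norm (x n))) \<le> norm (y n - x n)"
        using sgy_norm[of x n "\<lambda>k. y k - x k"] by simp
      also have "\<dots> < r" using a n by (simp add: dist_norm)
      finally show ?thesis by simp
    qed
    have near: "\<forall>n\<in>I. norm (sg x n * y n - of_real (norm (x n))) \<le> 3 * r"
    proof
      fix n assume n: "n \<in> I"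
      have "r \<le> 3 * r" using rpos by simp
      thus "norm (sg x n * y n - of_real (norm (x n))) \<le> 3 * r" using sdiff[OF n] by linarith
    qed
    have re: "\<forall>n\<in>I. Re (sg x n * y n) \<ge> norm (x n) - r"
    proof
      fix n assume n: "n \<in> I"
      have "norm (x n) - Re (sg x n * y n) = Re (of_real (norm (x n)) - sg x n * y n)" by simp
      also have "\<dots> \<le> norm (of_real (norm (x n)) - sg x n * y n)" by (rule complex_Re_le_cmod)
      also have "\<dots> \<le> r" using sdiff[OF n] by (simp add: norm_minus_commute)
      finally show "Re (sg x n * y n) \<ge> norm (x n) - r" by simp
    qed
    have "l1norm (y - x) \<le> 4 * r * real N + 2 * (1 - (\<Sum>n\<in>I. norm (x n)))"
      by (rule gap_core[OF y x fI IN Inz _ near re]) (use rpos in simp)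
    also have "4 * r * real N \<le> e / 2"
    proof -
      have "4 * r * real N = e / 2 * (real N / (real N + 1))" unfolding r_def by (simp add: field_simps)
      also have "\<dots> \<le> e / 2 * 1" using e by (intro mult_left_mono) auto
      finally show ?thesis by simp
    qed
    also have "2 * (1 - (\<Sum>n\<in>I. norm (x n))) < e / 4" unfolding WI using N by (simp add: field_simps)
    finally show "l1norm (y - x) < e" using e by simp
  qed
qed

lemma cl_eq:
  assumes x: "x \<in> l1_sphere" and f: "f \<in> A_inf" and F: "F \<noteq> bot"
    and ev: "eventually (\<lambda>y. y \<in> l1_ball) F" and coord: "\<forall>n. ((\<lambda>y. y n) \<longlongrightarrow> x n) F"
    and fv: "(f \<longlongrightarrow> v) F"
  shows "v = f x"
proof -
  have xc: "x \<in> l1_cball" using x sphere_sub_cball by blast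
  have "(f \<longlongrightarrow> f x) F" unfolding tendsto_iff
  proof (intro allI impI)
    fix e :: real assume e: "e > 0"
    obtain d where d: "d > 0" "\<forall>y\<in>l1_cball. l1norm (y - x) < d \<longrightarrow> norm (f y - f x) < e"
      using f xc e unfolding A_inf_def cont_on_l1_def by blast
    have "eventually (\<lambda>y. l1norm (y - x) < d \<and> y \<in> l1_ball) F"
      by (rule eventually_conj[OF kadec[OF x coord ev d(1)] ev])
    thus "eventually (\<lambda>y. dist (f y) (f x) < e) F"
      by (rule eventually_mono) (use d ball_sub_cball in \<open>auto simp: dist_norm\<close>)
  qed
  thus ?thesis using tendsto_unique[OF F fv] by simp
qed



section \<open>Polynomials\<close>

lemma multilin_hom:
  assumes A: "multilin_l1 k A" and xs: "x \<in> l1_space"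
  shows "A (replicate k (scl c x)) = c ^ k * A (replicate k x)"
proof -
  define Lj where "Lj = (\<lambda>j. map (\<lambda>i. if i < j then scl c x else x) [0..<k])"
  have sx: "scl c x \<in> l1_space" using l1_scl[OF xs] .
  have step: "\<forall>j\<le>k. A (Lj j) = c ^ j * A (Lj 0)"
  proof (intro allI impI)
    fix j show "j \<le> k \<Longrightarrow> A (Lj j) = c ^ j * A (Lj 0)"
    proof (induction j)
      case 0 thus ?case by simp
    next
      case (Suc j)
      have jk: "j < k" using Suc.prems by simp
      have len: "length (Lj j) = k" unfolding Lj_def by simp
      have set: "set (Lj j) \<subseteq> l1_space" unfolding Lj_def using xs sx by auto
      have e1: "(Lj j)[j := scl c x] = Lj (Suc j)"
        unfolding Lj_def by (rule nth_equalityI) (use jk in \<open>auto simp: nth_list_update\<close>)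
      have e2: "(Lj j)[j := x] = Lj j"
        unfolding Lj_def by (rule nth_equalityI) (use jk in \<open>auto simp: nth_list_update\<close>)
      have "A ((Lj j)[j := scl c x]) = c * A ((Lj j)[j := x])"
        using A len jk set xs unfolding multilin_l1_def by blast
      hence "A (Lj (Suc j)) = c * A (Lj j)" using e1 e2 by simp
      thus ?case using Suc.IH jk by simp
    qed
  qed
  have l0: "Lj 0 = replicate k x" unfolding Lj_def by (simp add: map_replicate_const)
  have lk: "Lj k = replicate k (scl c x)" unfolding Lj_def by (rule nth_equalityI) auto
  show ?thesis using step[rule_format, of k] l0 lk by simp
qed

lemma coord_poly: "(\<lambda>y. y n) \<in> poly_l1"
proof -
  define As where "As = (\<lambda>k::nat. if k = 0 then (\<lambda>xs::l1 list. 0::complex) else (\<lambda>xs. hd xs n))"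
  have m0: "multilin_l1 0 (As 0)" unfolding multilin_l1_def As_def by auto
  have m1: "multilin_l1 1 (As 1)" unfolding multilin_l1_def
  proof (intro conjI allI impI)
    fix xs :: "l1 list" and i :: nat and y z :: l1 and c :: complex
    assume a: "length xs = 1 \<and> i < 1 \<and> set xs \<subseteq> l1_space \<and> y \<in> l1_space \<and> z \<in> l1_space"
    then obtain u where u: "xs = [u]" by (auto simp: length_Suc_conv)
    have i: "i = 0" using a by simp
    show "As 1 (xs[i := y + z]) = As 1 (xs[i := y]) + As 1 (xs[i := z])" unfolding As_def u i by simp
    show "As 1 (xs[i := scl c y]) = c * As 1 (xs[i := y])" unfolding As_def u i scl_def by simp
  next
    have "\<forall>xs. length xs = 1 \<and> set xs \<subseteq> l1_space \<longrightarrow> norm (As 1 xs) \<le> 1 * (\<Prod>v\<leftarrow>xs. l1norm v)"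
    proof (intro allI impI)
      fix xs :: "l1 list" assume a: "length xs = 1 \<and> set xs \<subseteq> l1_space"
      then obtain u where u: "xs = [u]" by (auto simp: length_Suc_conv)
      show "norm (As 1 xs) \<le> 1 * (\<Prod>v\<leftarrow>xs. l1norm v)" using a l1norm_coord unfolding As_def u by simp
    qed
    thus "\<exists>C. \<forall>xs. length xs = 1 \<and> set xs \<subseteq> l1_space \<longrightarrow> norm (As 1 xs) \<le> C * (\<Prod>v\<leftarrow>xs. l1norm v)" by blast
  qed
  have "\<forall>k\<le>1. multilin_l1 k (As k)" using m0 m1 by (auto simp: le_Suc_eq)
  moreover have "\<forall>x\<in>l1_space. x n = (\<Sum>k\<le>1. As k (replicate k x))" unfolding As_def by simp
  ultimately show ?thesis unfolding poly_l1_def by blast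
qed

section \<open>The radial sequence\<close>

definition tt :: "nat \<Rightarrow> real" where "tt k = 1 - inverse (real (Suc (Suc k)))"
definition ys :: "l1 \<Rightarrow> nat \<Rightarrow> l1" where "ys x k = scl (of_real (tt k)) x"

lemma tt_bounds: "0 \<le> tt k" "tt k < 1"
  unfolding tt_def by (auto simp: field_simps)

lemma tt_lim: "tt \<longlonglongrightarrow> 1"
proof -
  have "(\<lambda>k. inverse (real (Suc (Suc k)))) \<longlonglongrightarrow> 0" by (rule LIMSEQ_Suc[OF LIMSEQ_inverse_real_of_nat])
  hence "(\<lambda>k. 1 - inverse (real (Suc (Suc k)))) \<longlonglongrightarrow> 1 - 0" by (intro tendsto_diff tendsto_const)
  thus ?thesis unfolding tt_def by simp
qed

lemma ys_ball: "x \<in> l1_cball \<Longrightarrow> ys x k \<in> l1_ball"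
  unfolding ys_def using scl_cball_ball tt_bounds by blast

lemma ys_dist: assumes "x \<in> l1_sphere" shows "l1norm (ys x k - x) = 1 - tt k"
proof -
  have "x \<in> l1_space" "l1norm x = 1" using assms unfolding l1_sphere_def by auto
  moreover have "\<bar>1 - tt k\<bar> = 1 - tt k" using tt_bounds(2)[of k] by simp
  ultimately show ?thesis unfolding ys_def using scl_dist by simp
qed

lemma ys_dist_lim: assumes "x \<in> l1_sphere" "d > 0" shows "eventually (\<lambda>k. l1norm (ys x k - x) < d) sequentially"
proof -
  have "(\<lambda>k. 1 - tt k) \<longlonglongrightarrow> 1 - 1" by (intro tendsto_diff tendsto_const tt_lim)
  hence "eventually (\<lambda>k. 1 - tt k < d) sequentially" using assms(2) by (intro order_tendstoD(2)) auto
  thus ?thesis using ys_dist[OF assms(1)] by simp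
qed

lemma ys_tt_lim: "(\<lambda>k. complex_of_real (tt k)) \<longlonglongrightarrow> 1"
  using tendsto_of_real[OF tt_lim, where 'a=complex] by simp

lemma cluster_contains:
  assumes x: "x \<in> l1_sphere" and f: "f \<in> A_inf"
  shows "f x \<in> cluster_set f x" "f x \<in> cluster_set_P f x"
proof -
  have xs: "x \<in> l1_space" and xc: "x \<in> l1_cball" using x sphere_sub_cball unfolding l1_sphere_def by auto
  define F where "F = filtermap (ys x) sequentially"
  have Fb: "F \<noteq> bot" unfolding F_def by (simp add: filtermap_bot_iff)
  have Fev: "eventually (\<lambda>y. y \<in> l1_ball) F" unfolding F_def eventually_filtermap using ys_ball[OF xc] by simp
  have Ff: "(f \<longlongrightarrow> f x) F" unfolding F_def filterlim_filtermap tendsto_iff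
  proof (intro allI impI)
    fix e :: real assume e: "e > 0"
    obtain d where d: "d > 0" "\<forall>y\<in>l1_cball. l1norm (y - x) < d \<longrightarrow> norm (f y - f x) < e"
      using f xc e unfolding A_inf_def cont_on_l1_def by blast
    show "eventually (\<lambda>k. dist (f (ys x k)) (f x) < e) sequentially"
      using ys_dist_lim[OF x d(1)] by (rule eventually_mono) (use d ys_ball[OF xc] ball_sub_cball in \<open>auto simp: dist_norm\<close>)
  qed
  have FL: "(L \<longlongrightarrow> L x) F" if L: "L \<in> l1_dual" for L
  proof -
    have "(\<lambda>k. complex_of_real (tt k) * L x) \<longlonglongrightarrow> 1 * L x" by (intro tendsto_mult ys_tt_lim tendsto_const)
    moreover have "L (ys x k) = complex_of_real (tt k) * L x" for k unfolding ys_def using dual_scl[OF L xs] .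
    ultimately show ?thesis unfolding F_def filterlim_filtermap by simp
  qed
  have FP: "(P \<longlongrightarrow> P x) F" if P: "P \<in> poly_l1" for P
  proof -
    obtain N As where NA: "\<forall>k\<le>N. multilin_l1 k (As k)" "\<forall>x\<in>l1_space. P x = (\<Sum>k\<le>N. As k (replicate k x))"
      using P unfolding poly_l1_def by blast
    have eq: "P (ys x k) = (\<Sum>m\<le>N. complex_of_real (tt k) ^ m * As m (replicate m x))" for k
    proof -
      have "ys x k \<in> l1_space" unfolding ys_def by (rule l1_scl[OF xs])
      hence "P (ys x k) = (\<Sum>m\<le>N. As m (replicate m (ys x k)))" using NA(2) by blast
      also have "\<dots> = (\<Sum>m\<le>N. complex_of_real (tt k) ^ m * As m (replicate m x))"
        by (rule sum.cong[OF refl]) (use NA(1) multilin_hom xs in \<open>auto simp: ys_def\<close>)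
      finally show ?thesis .
    qed
    have Px: "P x = (\<Sum>m\<le>N. 1 ^ m * As m (replicate m x))" using NA(2) xs by simp
    have "(\<lambda>k. \<Sum>m\<le>N. complex_of_real (tt k) ^ m * As m (replicate m x)) \<longlonglongrightarrow> (\<Sum>m\<le>N. 1 ^ m * As m (replicate m x))"
      by (intro tendsto_sum tendsto_mult tendsto_power ys_tt_lim tendsto_const)
    thus ?thesis unfolding F_def filterlim_filtermap eq Px .
  qed
  show "f x \<in> cluster_set f x" unfolding cluster_set_def using Fb Fev Ff FL by blast
  show "f x \<in> cluster_set_P f x" unfolding cluster_set_P_def using Fb Fev Ff FP by blast
qed



lemma near_ball: assumes y: "y \<in> l1_cball" and d: "d > 0" shows "\<exists>z\<in>l1_ball. l1norm (z - y) < d"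
proof -
  define t where "t = max (1/2) (1 - d/2)"
  have t: "0 \<le> t" "t < 1" unfolding t_def using d by auto
  have z: "scl (of_real t) y \<in> l1_ball" using scl_cball_ball[OF y t] .
  have "l1norm (scl (of_real t) y - y) = \<bar>1 - t\<bar> * l1norm y" using scl_dist cball_space[OF y] by blast
  also have "\<dots> \<le> \<bar>1 - t\<bar> * 1" using y unfolding l1_cball_def by (intro mult_left_mono) auto
  also have "\<dots> < d" unfolding t_def using d by auto
  finally show ?thesis using z by blast
qed

definition uc_prop :: "(l1 \<Rightarrow> complex) \<Rightarrow> l1 \<Rightarrow> complex \<Rightarrow> bool" where
  "uc_prop g y v \<longleftrightarrow> (\<forall>e>0. \<exists>d>0. \<forall>z\<in>l1_ball. l1norm (z - y) < d \<longrightarrow> norm (g z - v) < e)"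

lemma uc_unique: assumes y: "y \<in> l1_cball" and a: "uc_prop g y v" "uc_prop g y v'" shows "v' = v"
proof (rule ccontr)
  assume ne: "v' \<noteq> v"
  define e where "e = norm (v - v') / 2"
  have e: "e > 0" using ne unfolding e_def by simp
  obtain d1 where d1: "d1 > 0" "\<forall>z\<in>l1_ball. l1norm (z - y) < d1 \<longrightarrow> norm (g z - v) < e"
    using a(1) e unfolding uc_prop_def by blast
  obtain d2 where d2: "d2 > 0" "\<forall>z\<in>l1_ball. l1norm (z - y) < d2 \<longrightarrow> norm (g z - v') < e"
    using a(2) e unfolding uc_prop_def by blast
  obtain z where z: "z \<in> l1_ball" "l1norm (z - y) < min d1 d2" using near_ball[OF y, of "min d1 d2"] d1 d2 by auto
  have "norm (g z - v) < e" "norm (g z - v') < e" using d1 d2 z by auto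
  moreover have "norm (v - v') \<le> norm (g z - v) + norm (g z - v')"
    using norm_triangle_ineq[of "v - g z" "g z - v'"] by (simp add: norm_minus_commute)
  ultimately show False unfolding e_def by linarith
qed

lemma uc_ext_eq: assumes y: "y \<in> l1_cball" and p: "uc_prop g y v" shows "uc_ext g y = v"
  unfolding uc_ext_def
proof (rule the_equality)
  show "\<forall>e>0. \<exists>d>0. \<forall>ya\<in>l1_ball. l1norm (ya - y) < d \<longrightarrow> norm (g ya - v) < e"
    using p unfolding uc_prop_def by blast
next
  fix v' assume "\<forall>e>0. \<exists>d>0. \<forall>ya\<in>l1_ball. l1norm (ya - y) < d \<longrightarrow> norm (g ya - v') < e"
  hence "uc_prop g y v'" unfolding uc_prop_def by blast
  thus "v' = v" using uc_unique[OF y p] by blast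
qed

lemma dual_uc_prop: assumes L: "L \<in> l1_dual" and y: "y \<in> l1_cball" shows "uc_prop L y (L y)"
proof -
  have c: "cont_on_l1 l1_cball L" by (rule cont_dual[OF L]) (auto simp: l1_cball_def)
  show ?thesis unfolding uc_prop_def
  proof (intro allI impI)
    fix e :: real assume e: "e > 0"
    obtain d where d: "d > 0" "\<forall>z\<in>l1_cball. l1norm (z - y) < d \<longrightarrow> norm (L z - L y) < e"
      using c y e unfolding cont_on_l1_def by blast
    thus "\<exists>d>0. \<forall>z\<in>l1_ball. l1norm (z - y) < d \<longrightarrow> norm (L z - L y) < e" using ball_sub_cball by blast
  qed
qed

lemma dual_Au: assumes L: "L \<in> l1_dual" shows "L \<in> A_u"
proof -
  obtain C where C: "C \<ge> 0" "\<forall>x\<in>l1_space. norm (L x) \<le> C * l1norm x" using dual_bound[OF L] by blast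
  have h: "holo_on_ball L" unfolding holo_on_ball_def
  proof
    fix a assume a: "a \<in> l1_ball"
    have "hol_at L a" using hol_dual[OF L ball_space[OF a]] .
    thus "\<exists>D\<in>l1_dual. \<forall>e>0. \<exists>d>0. \<forall>h\<in>l1_space. l1norm h < d \<longrightarrow> norm (L (a + h) - L a - D h) \<le> e * l1norm h"
      unfolding hol_at_def small_def .
  qed
  have u: "unif_cont_on_l1 l1_ball L" unfolding unif_cont_on_l1_def
  proof (intro allI impI)
    fix e :: real assume e: "e > 0"
    have "\<forall>a\<in>l1_ball. \<forall>y\<in>l1_ball. l1norm (y - a) < e / (C + 1) \<longrightarrow> norm (L y - L a) < e"
    proof (intro ballI impI)
      fix a y assume a: "a \<in> l1_ball" and y: "y \<in> l1_ball" and d: "l1norm (y - a) < e / (C + 1)"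
      have sp: "y - a \<in> l1_space" using l1_diff ball_space a y by blast
      have "norm (L y - L a) = norm (L (y - a))" using dual_diff[OF L ball_space[OF y] ball_space[OF a]] by simp
      also have "\<dots> \<le> C * l1norm (y - a)" using C sp by auto
      also have "\<dots> \<le> (C + 1) * l1norm (y - a)" using l1norm_nonneg[OF sp] by (intro mult_right_mono) auto
      also have "\<dots> < (C + 1) * (e / (C + 1))" using d C by (intro mult_strict_left_mono) auto
      also have "\<dots> = e" using C by simp
      finally show "norm (L y - L a) < e" .
    qed
    moreover have "e / (C + 1) > 0" using e C by simp
    ultimately show "\<exists>d>0. \<forall>a\<in>l1_ball. \<forall>y\<in>l1_ball. l1norm (y - a) < d \<longrightarrow> norm (L y - L a) < e" by blast
  qed
  show ?thesis unfolding A_u_def using h u by blast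
qed

lemma fiberP_sub: assumes x: "x \<in> l1_sphere" and t: "\<tau> \<in> fiber_P x" shows "\<tau> \<in> fiber x"
proof -
  have xc: "x \<in> l1_cball" using x sphere_sub_cball by blast
  have "\<tau> (\<lambda>y. if y \<in> l1_cball then L y else 0) = L x" if L: "L \<in> l1_dual" for L
  proof -
    have "A_u_rep L = (\<lambda>y. if y \<in> l1_cball then L y else 0)"
    proof
      fix y show "A_u_rep L y = (if y \<in> l1_cball then L y else 0)"
      proof (cases "y \<in> l1_cball")
        case True thus ?thesis unfolding A_u_rep_def using uc_ext_eq[OF True dual_uc_prop[OF L True]] by simp
      qed (simp add: A_u_rep_def)
    qed
    moreover have "\<tau> (A_u_rep L) = uc_ext L x" using t dual_Au[OF L] unfolding fiber_P_def by blast
    moreover have "uc_ext L x = L x" using uc_ext_eq[OF xc dual_uc_prop[OF L xc]] .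
    ultimately show ?thesis by simp
  qed
  moreover have "\<tau> \<in> spectrum_A_inf" using t unfolding fiber_P_def by blast
  ultimately show ?thesis unfolding fiber_def by blast
qed

lemma ev_spectrum: assumes xc: "x \<in> l1_cball" shows "(\<lambda>g. g x) \<in> spectrum_A_inf"
proof -
  have "A_inf_one = R (\<lambda>y. 1)" unfolding A_inf_one_def R_def by simp
  hence "A_inf_one \<in> A_inf" using nice_R[OF nice_const[of 1]] by simp
  moreover have "A_inf_one x \<noteq> 0" using xc unfolding A_inf_one_def by simp
  ultimately show ?thesis unfolding spectrum_A_inf_def by auto
qed

lemma ev_fiber: assumes "x \<in> l1_sphere" shows "(\<lambda>g. g x) \<in> fiber x" "(\<lambda>g. g x) \<in> fiber_P x"
proof -
  have xc: "x \<in> l1_cball" using assms sphere_sub_cball by blast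
  show "(\<lambda>g. g x) \<in> fiber x" unfolding fiber_def using ev_spectrum[OF xc] xc by simp
  show "(\<lambda>g. g x) \<in> fiber_P x" unfolding fiber_P_def A_u_rep_def using ev_spectrum[OF xc] xc by simp
qed

theorem mainTheorem13:
  assumes "x \<in> l1_sphere"
  shows "\<forall>f\<in>A_inf. cluster_set f x = gelfand f ` fiber x
                 \<and> cluster_set_P f x = gelfand f ` fiber_P x"
proof
  fix f assume f: "f \<in> A_inf"
  have x: "x \<in> l1_sphere" using assms .
  have g1: "gelfand f ` fiber x = {f x}"
  proof
    show "gelfand f ` fiber x \<subseteq> {f x}" using fiber_eval[OF x _ f] unfolding gelfand_def by auto
    show "{f x} \<subseteq> gelfand f ` fiber x" using ev_fiber(1)[OF x] unfolding gelfand_def by force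
  qed
  have g2: "gelfand f ` fiber_P x = {f x}"
  proof
    show "gelfand f ` fiber_P x \<subseteq> {f x}" using fiber_eval[OF x fiberP_sub[OF x] f] unfolding gelfand_def by auto
    show "{f x} \<subseteq> gelfand f ` fiber_P x" using ev_fiber(2)[OF x] unfolding gelfand_def by force
  qed
  have c1: "cluster_set f x = {f x}"
  proof
    show "cluster_set f x \<subseteq> {f x}"
    proof
      fix v assume "v \<in> cluster_set f x"
      then obtain F where F: "F \<noteq> bot" "eventually (\<lambda>y. y \<in> l1_ball) F"
        "\<forall>L\<in>l1_dual. (L \<longlongrightarrow> L x) F" "(f \<longlongrightarrow> v) F" unfolding cluster_set_def by blast
      have "\<forall>n. ((\<lambda>y. y n) \<longlongrightarrow> x n) F"
      proof
        fix n have "((\<lambda>y. 1 * y n) \<longlongrightarrow> 1 * x n) F" using F(3) coord_dual[of 1 n] by blast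
        thus "((\<lambda>y. y n) \<longlongrightarrow> x n) F" by simp
      qed
      thus "v \<in> {f x}" using cl_eq[OF x f F(1,2) _ F(4)] by simp
    qed
    show "{f x} \<subseteq> cluster_set f x" using cluster_contains(1)[OF x f] by simp
  qed
  have c2: "cluster_set_P f x = {f x}"
  proof
    show "cluster_set_P f x \<subseteq> {f x}"
    proof
      fix v assume "v \<in> cluster_set_P f x"
      then obtain F where F: "F \<noteq> bot" "eventually (\<lambda>y. y \<in> l1_ball) F"
        "\<forall>P\<in>poly_l1. (P \<longlongrightarrow> P x) F" "(f \<longlongrightarrow> v) F" unfolding cluster_set_P_def by blast
      have "\<forall>n. ((\<lambda>y. y n) \<longlongrightarrow> x n) F" using F(3) coord_poly by blast
      thus "v \<in> {f x}" using cl_eq[OF x f F(1,2) _ F(4)] by simp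
    qed
    show "{f x} \<subseteq> cluster_set_P f x" using cluster_contains(2)[OF x f] by simp
  qed
  show "cluster_set f x = gelfand f ` fiber x \<and> cluster_set_P f x = gelfand f ` fiber_P x"
    using g1 g2 c1 c2 by simp
qed


end
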